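(* Let $\{F_b\}$ be a finite POVM on $\mathbb{C}^d$. Among all instruments compatible with $\{F_b\}$, i.e. families of operators $\{A_{bi}\}$ with $\sum_i A_{bi}^\dagger A_{bi}=F_b$ for every $b$, the average disturbance on the uniform ensemble, $$1-\int d\Omega_\psi\sum_{b,i}|\langle\psi|A_{bi}|\psi\rangle|^2,$$ attains its minimum at an instrument with one-term conditional dynamics (a single operator $A_b$ for each $b$); namely the choice $A_b=F_b^{1/2}$ is minimally disturbing.
   Context: A POVM $\{F_b\}$ is a finite family of positive semidefinite operators on $\mathbb{C}^d$ with $\sum_b F_b=I$. $d\Omega_\psi$ denotes the unitarily invariant probability measure on unit vectors (pure states) of $\mathbb{C}^d$. *)

theory Defs
  imports "HOL-Analysis.Analysis"
begin

definition cinner_vec :: "complex^'d \<Rightarrow> complex^'d \<Rightarrow> complex" where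
  "cinner_vec x y = (\<Sum>i\<in>UNIV. cnj (x $ i) * y $ i)"

definition adj :: "complex^'d^'d \<Rightarrow> complex^'d^'d" where
  "adj A = (\<chi> i j. cnj (A $ j $ i))"

text \<open>Positive semidefinite: \<open>\<langle>x|A x\<rangle>\<close> is a nonnegative real for every \<open>x\<close>
  (over \<open>\<complex>\<close> this implies hermiticity).\<close>
definition psd :: "complex^'d^'d \<Rightarrow> bool" where
  "psd A \<longleftrightarrow> (\<forall>x. Im (cinner_vec x (A *v x)) = 0 \<and> 0 \<le> Re (cinner_vec x (A *v x)))"

definition is_POVM :: "'b set \<Rightarrow> ('b \<Rightarrow> complex^'d^'d) \<Rightarrow> bool" where
  "is_POVM B F \<longleftrightarrow> finite B \<and> (\<forall>b\<in>B. psd (F b)) \<and> (\<Sum>b\<in>B. F b) = mat 1"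

definition psd_sqrt :: "complex^'d^'d \<Rightarrow> complex^'d^'d" where
  "psd_sqrt F = (THE S. psd S \<and> S ** S = F)"

definition compatible_instrument ::
  "'b set \<Rightarrow> ('b \<Rightarrow> complex^'d^'d) \<Rightarrow> ('b \<Rightarrow> 'i set) \<Rightarrow> ('b \<Rightarrow> 'i \<Rightarrow> complex^'d^'d) \<Rightarrow> bool" where
  "compatible_instrument B F I A \<longleftrightarrow>
     (\<forall>b\<in>B. finite (I b) \<and> (\<Sum>i\<in>I b. adj (A b i) ** A b i) = F b)"

text \<open>Average over the unitarily invariant probability measure on unit vectors of \<open>\<complex>^d\<close>,
  realised as the normalised cone (surface) measure: for a function \<open>f\<close> on the sphere,
  \<open>\<integral> f d\<Omega> = (1/vol B) \<integral>\<^sub>B f(x/|x|) dx\<close> with \<open>B\<close> the unit ball of \<open>\<complex>^d \<cong> \<real>^(2d)\<close>.\<close>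
definition sphere_avg :: "(complex^'d \<Rightarrow> real) \<Rightarrow> real" where
  "sphere_avg f =
     (\<integral>x\<in>ball 0 1. f (x /\<^sub>R norm x) \<partial>lebesgue) / measure lebesgue (ball (0::complex^'d) 1)"

definition avg_disturbance ::
  "'b set \<Rightarrow> ('b \<Rightarrow> 'i set) \<Rightarrow> ('b \<Rightarrow> 'i \<Rightarrow> complex^'d^'d) \<Rightarrow> real" where
  "avg_disturbance B I A =
     1 - sphere_avg (\<lambda>\<psi>. \<Sum>b\<in>B. \<Sum>i\<in>I b. (cmod (cinner_vec \<psi> (A b i *v \<psi>)))\<^sup>2)"

end

theory Submission
  imports Defs "HOL-Library.Countable"
begin

typedef 'a wo = "UNIV :: 'a set" by simp

instantiation wo :: (countable) linorder
begin
definition less_eq_wo :: "'a wo \<Rightarrow> 'a wo \<Rightarrow> bool" where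
  "less_eq_wo x y \<longleftrightarrow> to_nat (Rep_wo x) \<le> to_nat (Rep_wo y)"
definition less_wo :: "'a wo \<Rightarrow> 'a wo \<Rightarrow> bool" where
  "less_wo x y \<longleftrightarrow> to_nat (Rep_wo x) < to_nat (Rep_wo y)"
instance
proof
  fix x y z :: "'a wo"
  show "(x < y) = (x \<le> y \<and> \<not> y \<le> x)" by (auto simp: less_eq_wo_def less_wo_def)
  show "x \<le> x" by (simp add: less_eq_wo_def)
  show "x \<le> y \<Longrightarrow> y \<le> z \<Longrightarrow> x \<le> z" by (simp add: less_eq_wo_def)
  show "x \<le> y \<Longrightarrow> y \<le> x \<Longrightarrow> x = y"
    by (simp add: less_eq_wo_def Rep_wo_inject[symmetric])
  show "x \<le> y \<or> y \<le> x" by (auto simp: less_eq_wo_def)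
qed
end

instance wo :: (countable) wellorder
proof
  fix P :: "'a wo \<Rightarrow> bool" and a
  assume H: "\<And>x. (\<And>y. y < x \<Longrightarrow> P y) \<Longrightarrow> P x"
  have "\<And>n x. to_nat (Rep_wo x) = n \<Longrightarrow> P x"
  proof -
    fix n show "\<And>x. to_nat (Rep_wo x) = n \<Longrightarrow> P x"
      by (induction n rule: less_induct) (metis H less_wo_def)
  qed
  then show "P a" by blast
qed

instance wo :: (finite) finite
proof
  have "UNIV = Abs_wo ` UNIV" by (metis Rep_wo_inverse surj_def)
  then show "finite (UNIV :: 'a wo set)" by (metis finite_imageI finite)
qed

lemma card_wo: "CARD('a::finite wo) = CARD('a)"
  using type_definition.card[OF type_definition_wo] by simp

lemma lborel_basis_map:
  fixes \<sigma> :: "'a::euclidean_space \<Rightarrow> 'b::euclidean_space"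
  assumes bij: "bij_betw \<sigma> Basis Basis"
  defines "\<Phi> \<equiv> (\<lambda>x. \<Sum>b\<in>Basis. (x \<bullet> b) *\<^sub>R \<sigma> b)"
  shows "distr lborel borel \<Phi> = lborel"
proof -
  define \<Psi> where "\<Psi> = (\<lambda>y::'b. \<Sum>b\<in>Basis. (y \<bullet> \<sigma> b) *\<^sub>R b)"
  have sb: "b \<in> Basis \<Longrightarrow> \<sigma> b \<in> Basis" for b using bij by (auto simp: bij_betw_def)
  have sinj: "b \<in> Basis \<Longrightarrow> c \<in> Basis \<Longrightarrow> \<sigma> b = \<sigma> c \<Longrightarrow> b = c" for b c
    using bij by (auto simp: bij_betw_def inj_on_def)
  have Phi_inner: "\<Phi> x \<bullet> \<sigma> c = x \<bullet> c" if "c \<in> Basis" for x c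
  proof -
    have "\<Phi> x \<bullet> \<sigma> c = (\<Sum>b\<in>Basis. (x \<bullet> b) * (\<sigma> b \<bullet> \<sigma> c))"
      by (simp add: \<Phi>_def inner_sum_left)
    also have "\<dots> = (\<Sum>b\<in>Basis. if b = c then x \<bullet> b else 0)"
      by (rule sum.cong) (use that sb sinj in \<open>auto simp: inner_Basis\<close>)
    finally show ?thesis using that by simp
  qed
  have Psi_inner: "\<Psi> y \<bullet> c = y \<bullet> \<sigma> c" if "c \<in> Basis" for y c
    using that by (simp add: \<Psi>_def inner_sum_left inner_Basis if_distrib cong: if_cong)
  have lin: "linear \<Phi>" unfolding \<Phi>_def
    by (auto simp: linear_iff inner_add_left scaleR_add_left sum.distrib scaleR_sum_right)
  have meas: "\<Phi> \<in> borel_measurable borel"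
    by (intro borel_measurable_continuous_onI linear_continuous_on linear_conv_bounded_linear[THEN iffD1] lin)
  show ?thesis
  proof (rule lborel_eqI[symmetric])
    fix l u :: 'b assume le: "\<And>b. b \<in> Basis \<Longrightarrow> l \<bullet> b \<le> u \<bullet> b"
    have pre: "\<Phi> -` box l u = box (\<Psi> l) (\<Psi> u)"
    proof -
      have "x \<in> \<Phi> -` box l u \<longleftrightarrow> (\<forall>b\<in>Basis. l \<bullet> \<sigma> b < x \<bullet> b \<and> x \<bullet> b < u \<bullet> \<sigma> b)" for x
      proof -
        have "x \<in> \<Phi> -` box l u \<longleftrightarrow> (\<forall>b'\<in>Basis. l \<bullet> b' < \<Phi> x \<bullet> b' \<and> \<Phi> x \<bullet> b' < u \<bullet> b')"
          by (simp add: mem_box)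
        also have "\<dots> \<longleftrightarrow> (\<forall>b\<in>Basis. l \<bullet> \<sigma> b < \<Phi> x \<bullet> \<sigma> b \<and> \<Phi> x \<bullet> \<sigma> b < u \<bullet> \<sigma> b)"
          using bij by (metis (no_types, lifting) bij_betw_def imageE sb)
        finally show ?thesis by (simp add: Phi_inner)
      qed
      then show ?thesis by (auto simp: mem_box Psi_inner)
    qed
    have "emeasure (distr lborel borel \<Phi>) (box l u) = emeasure lborel (box (\<Psi> l) (\<Psi> u))"
      using meas by (simp add: emeasure_distr pre)
    also have "\<dots> = (\<Prod>b\<in>Basis. (\<Psi> u - \<Psi> l) \<bullet> b)"
      using le sb by (intro emeasure_lborel_box) (auto simp: Psi_inner)
    also have "\<dots> = (\<Prod>b\<in>Basis. (u - l) \<bullet> \<sigma> b)"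
      by (intro arg_cong[where f=ennreal] prod.cong refl) (simp add: inner_diff_left Psi_inner)
    also have "\<dots> = (\<Prod>b\<in>Basis. (u - l) \<bullet> b)"
      using prod.reindex_bij_betw[OF bij, of "\<lambda>b. (u - l) \<bullet> b"] by (simp add: o_def)
    finally show "emeasure (distr lborel borel \<Phi>) (box l u) = (\<Prod>b\<in>Basis. (u - l) \<bullet> b)" .
  qed simp
qed

lemma lborel_orthogonal_cart:
  fixes R :: "real^'m::{finite,wellorder} \<Rightarrow> real^'m::_"
  assumes R: "orthogonal_transformation R"
  shows "distr lborel borel R = lborel"
proof -
  have lin: "linear R" using R orthogonal_transformation_linear by blast
  have meas: "R \<in> borel_measurable borel"
    by (intro borel_measurable_continuous_onI linear_continuous_on linear_conv_bounded_linear[THEN iffD1] lin)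
  have Ri: "orthogonal_transformation (inv R)" using R orthogonal_transformation_inv by blast
  have bR: "bij R" using R orthogonal_transformation_bij by blast
  show ?thesis
  proof (rule lborel_eqI[symmetric])
    fix l u :: "real^'m::{finite,wellorder}" assume le: "\<And>b. b \<in> Basis \<Longrightarrow> l \<bullet> b \<le> u \<bullet> b"
    have pre: "R -` box l u = inv R ` box l u"
      using bR by (simp add: bij_vimage_eq_inv_image)
    have bor: "R -` box l u \<in> sets borel"
      using meas by (simp add: measurable_sets_borel)
    have lm: "inv R ` box l u \<in> lmeasurable"
      by (rule measurable_orthogonal_image[OF Ri]) simp
    have "emeasure (distr lborel borel R) (box l u) = emeasure lborel (R -` box l u)"
      using meas by (simp add: emeasure_distr)
    also have "\<dots> = emeasure lebesgue (R -` box l u)"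
      using bor by (simp add: emeasure_completion)
    also have "\<dots> = ennreal (measure lebesgue (inv R ` box l u))"
      using lm pre by (simp add: emeasure_eq_measure2)
    also have "\<dots> = ennreal (measure lebesgue (box l u))"
      by (simp add: measure_orthogonal_image[OF Ri])
    also have "\<dots> = emeasure lborel (box l u)"
      by (simp add: emeasure_eq_measure2)
    also have "\<dots> = (\<Prod>b\<in>Basis. (u - l) \<bullet> b)"
      using le by (intro emeasure_lborel_box) auto
    finally show "emeasure (distr lborel borel R) (box l u) = (\<Prod>b\<in>Basis. (u - l) \<bullet> b)" .
  qed simp
qed

lemma basis_map_inner:
  fixes \<sigma> :: "'a::euclidean_space \<Rightarrow> 'b::euclidean_space"
  assumes bij: "bij_betw \<sigma> Basis Basis" and c: "c \<in> Basis"
  shows "(\<Sum>b\<in>Basis. (x \<bullet> b) *\<^sub>R \<sigma> b) \<bullet> \<sigma> c = x \<bullet> c"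
proof -
  have sb: "b \<in> Basis \<Longrightarrow> \<sigma> b \<in> Basis" for b using bij by (auto simp: bij_betw_def)
  have sinj: "b \<in> Basis \<Longrightarrow> c \<in> Basis \<Longrightarrow> \<sigma> b = \<sigma> c \<Longrightarrow> b = c" for b c
    using bij by (auto simp: bij_betw_def inj_on_def)
  have "(\<Sum>b\<in>Basis. (x \<bullet> b) *\<^sub>R \<sigma> b) \<bullet> \<sigma> c = (\<Sum>b\<in>Basis. (x \<bullet> b) * (\<sigma> b \<bullet> \<sigma> c))"
    by (simp add: inner_sum_left)
  also have "\<dots> = (\<Sum>b\<in>Basis. if b = c then x \<bullet> b else 0)"
    by (rule sum.cong) (use c sb sinj in \<open>auto simp: inner_Basis\<close>)
  finally show ?thesis using c by simp
qed

lemma basis_map_inner2: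
  fixes \<sigma> :: "'a::euclidean_space \<Rightarrow> 'b::euclidean_space"
  assumes bij: "bij_betw \<sigma> Basis Basis"
  shows "(\<Sum>b\<in>Basis. (x \<bullet> b) *\<^sub>R \<sigma> b) \<bullet> (\<Sum>b\<in>Basis. (y \<bullet> b) *\<^sub>R \<sigma> b) = x \<bullet> y"
proof -
  let ?P = "\<lambda>x. (\<Sum>b\<in>Basis. (x \<bullet> b) *\<^sub>R \<sigma> b)"
  have "?P x \<bullet> ?P y = (\<Sum>c\<in>Basis. (?P x \<bullet> c) * (?P y \<bullet> c))"
    by (rule euclidean_inner)
  also have "\<dots> = (\<Sum>b\<in>Basis. (?P x \<bullet> \<sigma> b) * (?P y \<bullet> \<sigma> b))"
    using sum.reindex_bij_betw[OF bij, of "\<lambda>c. (?P x \<bullet> c) * (?P y \<bullet> c)"] by simp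
  also have "\<dots> = (\<Sum>b\<in>Basis. (x \<bullet> b) * (y \<bullet> b))"
    by (intro sum.cong refl) (simp add: basis_map_inner[OF bij])
  also have "\<dots> = x \<bullet> y" by (rule euclidean_inner[symmetric])
  finally show ?thesis .
qed

lemma basis_map_linear:
  "linear (\<lambda>x. \<Sum>b\<in>Basis. (x \<bullet> b) *\<^sub>R (\<sigma> b :: 'b::real_vector))"
  by (auto simp: linear_iff inner_add_left scaleR_add_left sum.distrib scaleR_sum_right)

lemma linear_borel_measurable:
  fixes f :: "'a::euclidean_space \<Rightarrow> 'b::euclidean_space"
  shows "linear f \<Longrightarrow> f \<in> borel_measurable borel"
  by (intro borel_measurable_continuous_onI linear_continuous_on linear_conv_bounded_linear[THEN iffD1])

lemma lborel_orthogonal_gen: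
  fixes T :: "'a::euclidean_space \<Rightarrow> 'a"
  assumes T: "orthogonal_transformation T"
    and card: "CARD('m::{finite,wellorder}) = DIM('a)"
  shows "distr lborel borel T = lborel"
proof -
  have "card (Basis :: 'a set) = card (Basis :: (real^('m::{finite,wellorder})) set)"
    using card by simp
  then obtain \<sigma> :: "'a \<Rightarrow> real^('m::{finite,wellorder})" where bij: "bij_betw \<sigma> Basis Basis"
    by (metis finite_Basis finite_same_card_bij)
  define \<tau> where "\<tau> = inv_into Basis \<sigma>"
  have bij2: "bij_betw \<tau> Basis Basis" unfolding \<tau>_def by (rule bij_betw_inv_into[OF bij])
  define \<Phi> where "\<Phi> = (\<lambda>x::'a. \<Sum>b\<in>Basis. (x \<bullet> b) *\<^sub>R \<sigma> b)"
  define \<Psi> where "\<Psi> = (\<lambda>y::real^('m::{finite,wellorder}). \<Sum>b\<in>Basis. (y \<bullet> b) *\<^sub>R \<tau> b)"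
  have PsiPhi: "\<Psi> (\<Phi> x) = x" for x
  proof -
    have "\<Psi> (\<Phi> x) = (\<Sum>c\<in>Basis. (\<Phi> x \<bullet> c) *\<^sub>R \<tau> c)" by (simp add: \<Psi>_def)
    also have "\<dots> = (\<Sum>b\<in>Basis. (\<Phi> x \<bullet> \<sigma> b) *\<^sub>R \<tau> (\<sigma> b))"
      using sum.reindex_bij_betw[OF bij, of "\<lambda>c. (\<Phi> x \<bullet> c) *\<^sub>R \<tau> c"] by simp
    also have "\<dots> = (\<Sum>b\<in>Basis. (x \<bullet> b) *\<^sub>R b)"
      by (intro sum.cong refl) (simp add: \<Phi>_def basis_map_inner[OF bij] \<tau>_def bij_betw_inv_into_left[OF bij])
    also have "\<dots> = x" by (rule euclidean_representation)
    finally show ?thesis .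
  qed
  have linPhi: "linear \<Phi>" unfolding \<Phi>_def by (rule basis_map_linear)
  have linPsi: "linear \<Psi>" unfolding \<Psi>_def by (rule basis_map_linear)
  have linT: "linear T" using T orthogonal_transformation_linear by blast
  define R where "R = \<Phi> \<circ> T \<circ> \<Psi>"
  have R: "orthogonal_transformation R"
    unfolding orthogonal_transformation_def R_def
  proof (intro conjI allI)
    show "linear (\<Phi> \<circ> T \<circ> \<Psi>)" using linPhi linPsi linT by (intro linear_compose)
    fix v w :: "real^('m::{finite,wellorder})"
    show "(\<Phi> \<circ> T \<circ> \<Psi>) v \<bullet> (\<Phi> \<circ> T \<circ> \<Psi>) w = v \<bullet> w"
      using T by (simp add: \<Phi>_def \<Psi>_def basis_map_inner2[OF bij] basis_map_inner2[OF bij2]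
           orthogonal_transformation_def)
  qed
  have Teq: "T = \<Psi> \<circ> R \<circ> \<Phi>" by (rule ext) (simp add: R_def PsiPhi)
  have mPhi: "\<Phi> \<in> borel_measurable borel" by (rule linear_borel_measurable[OF linPhi])
  have mPsi: "\<Psi> \<in> borel_measurable borel" by (rule linear_borel_measurable[OF linPsi])
  have mR: "R \<in> borel_measurable borel"
    using R orthogonal_transformation_linear linear_borel_measurable by blast
  have "distr lborel borel T = distr (distr (distr lborel borel \<Phi>) borel R) borel \<Psi>"
    using mPhi mPsi mR by (simp add: distr_distr Teq comp_assoc)
  also have "\<dots> = lborel"
    using lborel_basis_map[OF bij] lborel_basis_map[OF bij2] lborel_orthogonal_cart[OF R]
    by (simp add: \<Phi>_def \<Psi>_def)
  finally show ?thesis .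
qed

lemma lborel_orthogonal_cvec:
  fixes T :: "complex^'d \<Rightarrow> complex^'d"
  assumes T: "orthogonal_transformation T"
  shows "distr lborel borel T = lborel"
  by (rule lborel_orthogonal_gen[OF T, where 'm="('d \<times> bool) wo"]) (simp add: card_wo)


definition mu :: "(complex^'d \<Rightarrow> complex) \<Rightarrow> complex" where
  "mu h = integral\<^sup>L lebesgue (\<lambda>x. indicator (ball (0::complex^'d) 1) x *\<^sub>R h (x /\<^sub>R norm x))"

lemma meas_normalize: "(\<lambda>x::'a::euclidean_space. x /\<^sub>R norm x) \<in> borel_measurable borel"
  by measurable

lemma mu_inv:
  fixes T :: "complex^'d \<Rightarrow> complex^'d"
  assumes T: "orthogonal_transformation T" and h: "h \<in> borel_measurable borel"
  shows "mu (\<lambda>\<psi>. h (T \<psi>)) = mu h"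
proof -
  let ?g = "\<lambda>x. indicator (ball (0::complex^'d) 1) x *\<^sub>R h (x /\<^sub>R norm x)"
  have mT: "T \<in> borel_measurable borel"
    using T orthogonal_transformation_linear linear_borel_measurable by blast
  have mg0: "(\<lambda>x. h (x /\<^sub>R norm x)) \<in> borel_measurable borel"
    by (rule measurable_compose[OF meas_normalize h])
  have mg: "?g \<in> borel_measurable borel"
    by (intro borel_measurable_scaleR borel_measurable_indicator mg0) simp
  have mg2: "(\<lambda>x. ?g (T x)) \<in> borel_measurable borel"
    by (rule measurable_compose[OF mT mg])
  have eq: "?g (T x) = indicator (ball (0::complex^'d) 1) x *\<^sub>R h (T (x /\<^sub>R norm x))" for x
    using T by (simp add: orthogonal_transformation_norm orthogonal_transformation_scaleR indicator_def)
  have "mu h = integral\<^sup>L lborel ?g"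
    unfolding mu_def using mg by (simp add: integral_completion)
  also have "\<dots> = integral\<^sup>L (distr lborel borel T) ?g"
    by (simp add: lborel_orthogonal_cvec[OF T])
  also have "\<dots> = integral\<^sup>L lborel (\<lambda>x. ?g (T x))"
    using mT mg by (simp add: integral_distr)
  also have "\<dots> = integral\<^sup>L lebesgue (\<lambda>x. ?g (T x))"
    using mg2 by (simp add: integral_completion)
  also have "\<dots> = mu (\<lambda>\<psi>. h (T \<psi>))"
    unfolding mu_def eq ..
  finally show ?thesis ..
qed

lemma mu_integrable:
  fixes h :: "complex^'d \<Rightarrow> complex"
  assumes h: "continuous_on UNIV h"
  shows "integrable lebesgue (\<lambda>x. indicator (ball (0::complex^'d) 1) x *\<^sub>R h (x /\<^sub>R norm x))"
proof -
  have "compact (h ` cball 0 1)"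
    using h by (intro compact_continuous_image continuous_on_subset[OF h]) auto
  then obtain B where B: "\<And>y. y \<in> cball 0 1 \<Longrightarrow> norm (h y) \<le> B"
    by (meson bounded_iff compact_imp_bounded imageI)
  have mh: "h \<in> borel_measurable borel" using h borel_measurable_continuous_onI by blast
  have mg: "(\<lambda>x. h (x /\<^sub>R norm x)) \<in> borel_measurable lebesgue"
    using measurable_compose[OF meas_normalize mh] by (simp add: measurable_completion)
  show ?thesis
  proof (rule integrableI_bounded_set_indicator[where B=B])
    show "ball 0 1 \<in> sets lebesgue" by simp
    show "(\<lambda>x. h (x /\<^sub>R norm x)) \<in> borel_measurable lebesgue" by (rule mg)
    show "emeasure lebesgue (ball (0::complex^'d) 1) < \<infinity>"
      using emeasure_bounded_finite by auto
    show "AE x in lebesgue. x \<in> ball 0 1 \<longrightarrow> norm (h (x /\<^sub>R norm x)) \<le> B"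
    proof (rule AE_I2, rule impI, rule B)
      fix x :: "complex^'d"
      show "x /\<^sub>R norm x \<in> cball 0 1"
        by (cases "x = 0") auto
    qed
  qed
qed

lemma mu_cmult: "mu (\<lambda>\<psi>. c * h \<psi>) = c * mu h"
  unfolding mu_def by (simp add: scaleR_conv_of_real mult.left_commute)

lemma mu_add:
  assumes "continuous_on UNIV f" "continuous_on UNIV g"
  shows "mu (\<lambda>\<psi>. f \<psi> + g \<psi>) = mu f + mu g"
  unfolding mu_def scaleR_add_right
  by (rule Bochner_Integration.integral_add[OF mu_integrable[OF assms(1)] mu_integrable[OF assms(2)]])

lemma mu_sum:
  assumes "finite S" "\<And>s. s \<in> S \<Longrightarrow> continuous_on UNIV (f s)"
  shows "mu (\<lambda>\<psi>. \<Sum>s\<in>S. f s \<psi>) = (\<Sum>s\<in>S. mu (f s))"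
  unfolding mu_def scaleR_sum_right
  by (rule Bochner_Integration.integral_sum) (use mu_integrable assms(2) in auto)

lemma cont_nth: "continuous_on UNIV (\<lambda>\<psi>::complex^'d. \<psi> $ j)"
  by (intro linear_continuous_on bounded_linear_vec_nth bounded_linear_ident)

lemma orth_cvec:
  fixes T :: "complex^'d \<Rightarrow> complex^'d"
  assumes lin: "linear T" and n: "\<And>\<psi>. (\<Sum>i\<in>UNIV. (cmod (T \<psi> $ i))\<^sup>2) = (\<Sum>i\<in>UNIV. (cmod (\<psi> $ i))\<^sup>2)"
  shows "orthogonal_transformation T"
  unfolding orthogonal_transformation using lin n by (simp add: norm_vec_def L2_set_def)

definition Ph :: "'d \<Rightarrow> complex^'d \<Rightarrow> complex^'d" where
  "Ph p \<psi> = (\<chi> j. (if j = p then \<i> else 1) * \<psi> $ j)"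

definition Sw :: "'d \<Rightarrow> 'd \<Rightarrow> complex^'d \<Rightarrow> complex^'d" where
  "Sw p q \<psi> = (\<chi> j. if j = p then \<psi> $ q else if j = q then \<psi> $ p else \<psi> $ j)"

definition Rt :: "'d \<Rightarrow> 'd \<Rightarrow> complex^'d \<Rightarrow> complex^'d" where
  "Rt p q \<psi> = (\<chi> j. if j = p then (\<psi> $ p + \<psi> $ q) / of_real (sqrt 2)
       else if j = q then (\<psi> $ p - \<psi> $ q) / of_real (sqrt 2) else \<psi> $ j)"

lemma orth_Ph: "orthogonal_transformation (Ph p)"
proof (rule orth_cvec)
  show "linear (Ph p)"
    by (auto simp: linear_iff Ph_def vec_eq_iff algebra_simps scaleR_conv_of_real)
  show "(\<Sum>i\<in>UNIV. (cmod (Ph p \<psi> $ i))\<^sup>2) = (\<Sum>i\<in>UNIV. (cmod (\<psi> $ i))\<^sup>2)" for \<psi>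
    by (intro sum.cong refl) (simp add: Ph_def norm_mult)
qed

lemma orth_Sw:
  fixes p q :: "'d::finite"
  shows "orthogonal_transformation (Sw p q)"
proof (rule orth_cvec)
  show "linear (Sw p q)"
    by (auto simp: linear_iff Sw_def vec_eq_iff)
  fix \<psi> :: "complex^'d"
  let ?s = "\<lambda>j. if j = p then q else if j = q then p else j"
  have "bij ?s" by (rule bijI) (auto simp: inj_def surj_def split: if_splits)
  have "(\<Sum>i\<in>UNIV. (cmod (Sw p q \<psi> $ i))\<^sup>2) = (\<Sum>i\<in>UNIV. (cmod (\<psi> $ ?s i))\<^sup>2)"
    by (intro sum.cong refl) (simp add: Sw_def)
  also have "\<dots> = (\<Sum>i\<in>UNIV. (cmod (\<psi> $ i))\<^sup>2)"
    using sum.reindex_bij_betw[of ?s UNIV UNIV "\<lambda>i. (cmod (\<psi> $ i))\<^sup>2"] \<open>bij ?s\<close>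
    by (simp add: bij_betw_def)
  finally show "(\<Sum>i\<in>UNIV. (cmod (Sw p q \<psi> $ i))\<^sup>2) = (\<Sum>i\<in>UNIV. (cmod (\<psi> $ i))\<^sup>2)" .
qed

lemma cmod_parallelogram: "(cmod (a + b))\<^sup>2 + (cmod (a - b))\<^sup>2 = 2 * (cmod a)\<^sup>2 + 2 * (cmod b)\<^sup>2"
  unfolding cmod_power2 by (simp add: power2_eq_square algebra_simps)

lemma orth_Rt:
  fixes p q :: "'d::finite"
  assumes pq: "p \<noteq> q"
  shows "orthogonal_transformation (Rt p q)"
proof (rule orth_cvec)
  show "linear (Rt p q)"
    by (auto simp: linear_iff Rt_def vec_eq_iff) (simp_all add: scaleR_conv_of_real algebra_simps add_divide_distrib diff_divide_distrib)
  fix \<psi> :: "complex^'d"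
  have s2: "(cmod (z / complex_of_real (sqrt 2)))\<^sup>2 = (cmod z)\<^sup>2 / 2" for z
    by (simp add: norm_divide power_divide)
  have split: "(\<Sum>i\<in>UNIV. f i) = f p + f q + (\<Sum>i\<in>UNIV - {p, q}. f i)" for f :: "'d \<Rightarrow> real"
  proof -
    have "(\<Sum>i\<in>UNIV. f i) = (\<Sum>i\<in>{p,q}. f i) + (\<Sum>i\<in>UNIV - {p, q}. f i)"
      by (metis add.commute finite sum.subset_diff top_greatest)
    then show ?thesis using pq by simp
  qed
  have "(\<Sum>i\<in>UNIV. (cmod (Rt p q \<psi> $ i))\<^sup>2) = (cmod (Rt p q \<psi> $ p))\<^sup>2 + (cmod (Rt p q \<psi> $ q))\<^sup>2
     + (\<Sum>i\<in>UNIV - {p, q}. (cmod (Rt p q \<psi> $ i))\<^sup>2)" by (rule split)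
  also have "\<dots> = (cmod (\<psi> $ p))\<^sup>2 + (cmod (\<psi> $ q))\<^sup>2 + (\<Sum>i\<in>UNIV - {p, q}. (cmod (\<psi> $ i))\<^sup>2)"
    using pq cmod_parallelogram[of "\<psi> $ p" "\<psi> $ q"] by (simp add: Rt_def s2)
  also have "\<dots> = (\<Sum>i\<in>UNIV. (cmod (\<psi> $ i))\<^sup>2)" by (rule split[symmetric])
  finally show "(\<Sum>i\<in>UNIV. (cmod (Rt p q \<psi> $ i))\<^sup>2) = (\<Sum>i\<in>UNIV. (cmod (\<psi> $ i))\<^sup>2)" .
qed


definition mon4 :: "'d \<Rightarrow> 'd \<Rightarrow> 'd \<Rightarrow> 'd \<Rightarrow> complex^'d \<Rightarrow> complex" where
  "mon4 j k l m \<psi> = cnj (\<psi> $ j) * \<psi> $ k * \<psi> $ l * cnj (\<psi> $ m)"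

lemma cont_mon4: "continuous_on UNIV (mon4 j k l m)"
  unfolding mon4_def by (intro continuous_intros cont_nth)

lemma cont_borel: "continuous_on UNIV f \<Longrightarrow> f \<in> borel_measurable borel"
  using borel_measurable_continuous_onI by blast

lemma mu_mon4_zero:
  fixes j k l m :: "'d::finite"
  assumes nz: "\<not> ((k = j \<and> l = m) \<or> (k = m \<and> l = j))"
  shows "mu (mon4 j k l m) = 0"
proof -
  define g where "g p x = (if x = p then \<i> else 1)" for p x :: "'d"
  define cf where "cf p = cnj (g p j) * g p k * g p l * cnj (g p m)" for p
  have ph: "mon4 j k l m (Ph p \<psi>) = cf p * mon4 j k l m \<psi>" for p \<psi>
    by (simp add: mon4_def Ph_def cf_def g_def[symmetric] algebra_simps)
  obtain p where p: "cf p \<noteq> 1"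
  proof (cases "k = j")
    case True
    then have "l \<noteq> m" using nz by auto
    then have "cf m \<noteq> 1" using True by (auto simp: cf_def g_def complex_eq_iff)
    then show ?thesis using that by blast
  next
    case kj: False
    show ?thesis
    proof (cases "l = j")
      case True
      then have "k \<noteq> m" using nz by auto
      then have "cf m \<noteq> 1" using True by (auto simp: cf_def g_def complex_eq_iff)
      then show ?thesis using that by blast
    next
      case False
      then have "cf j \<noteq> 1" using kj by (auto simp: cf_def g_def complex_eq_iff)
      then show ?thesis using that by blast
    qed
  qed
  have "mu (mon4 j k l m) = mu (\<lambda>\<psi>. mon4 j k l m (Ph p \<psi>))"
    by (rule mu_inv[OF orth_Ph cont_borel[OF cont_mon4], symmetric])
  also have "\<dots> = cf p * mu (mon4 j k l m)"
    unfolding ph by (rule mu_cmult)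
  finally have "(1 - cf p) * mu (mon4 j k l m) = 0" by (simp add: algebra_simps)
  with p show ?thesis by simp
qed

definition NN :: "'d::finite \<Rightarrow> 'd \<Rightarrow> complex" where
  "NN a b = mu (\<lambda>\<psi>::complex^'d. of_real ((cmod (\<psi> $ a))\<^sup>2 * (cmod (\<psi> $ b))\<^sup>2))"

lemma cont_NN: "continuous_on UNIV (\<lambda>\<psi>::complex^'d. complex_of_real ((cmod (\<psi> $ a))\<^sup>2 * (cmod (\<psi> $ b))\<^sup>2))"
  by (intro continuous_intros cont_nth)

lemma mu_mon4:
  fixes j k l m :: "'d::finite"
  shows "mu (mon4 j k l m) = (if k = j \<and> l = m then NN j l else if k = m \<and> l = j then NN j k else 0)"
proof (cases "k = j \<and> l = m")
  case True
  have e: "mon4 j k l m = (\<lambda>\<psi>. of_real ((cmod (\<psi> $ j))\<^sup>2 * (cmod (\<psi> $ l))\<^sup>2))"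
  proof
    fix \<psi> :: "complex^'d"
    have "of_real ((cmod (\<psi> $ j))\<^sup>2 * (cmod (\<psi> $ l))\<^sup>2) = (\<psi> $ j * cnj (\<psi> $ j)) * (\<psi> $ l * cnj (\<psi> $ l))"
      unfolding of_real_mult complex_norm_square ..
    then show "mon4 j k l m \<psi> = of_real ((cmod (\<psi> $ j))\<^sup>2 * (cmod (\<psi> $ l))\<^sup>2)"
      using True unfolding mon4_def by (simp only: mult_ac)
  qed
  have "mu (mon4 j k l m) = NN j l" unfolding e NN_def ..
  then show ?thesis using True by (simp only: simp_thms if_True)
next
  case F: False
  show ?thesis
  proof (cases "k = m \<and> l = j")
    case True
    have e: "mon4 j k l m = (\<lambda>\<psi>. of_real ((cmod (\<psi> $ j))\<^sup>2 * (cmod (\<psi> $ k))\<^sup>2))"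
    proof
      fix \<psi> :: "complex^'d"
      have "of_real ((cmod (\<psi> $ j))\<^sup>2 * (cmod (\<psi> $ k))\<^sup>2) = (\<psi> $ j * cnj (\<psi> $ j)) * (\<psi> $ k * cnj (\<psi> $ k))"
        unfolding of_real_mult complex_norm_square ..
      then show "mon4 j k l m \<psi> = of_real ((cmod (\<psi> $ j))\<^sup>2 * (cmod (\<psi> $ k))\<^sup>2)"
        using True unfolding mon4_def by (simp only: mult_ac)
    qed
    have "mu (mon4 j k l m) = NN j k" unfolding e NN_def ..
    then show ?thesis using True F by (simp only: simp_thms if_True if_False)
  next
    case False
    then have "mu (mon4 j k l m) = 0" using F by (intro mu_mon4_zero) blast
    then show ?thesis using False F by (simp only: simp_thms if_False)
  qed
qed

lemma NN_sym: "NN a b = NN b a"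
  unfolding NN_def by (subst mult.commute) (rule refl)

lemma NN_diag:
  fixes a b :: "'d::finite"
  shows "NN a a = NN b b"
proof -
  have "NN b b = mu (\<lambda>\<psi>. (\<lambda>\<phi>::complex^'d. complex_of_real ((cmod (\<phi> $ a))\<^sup>2 * (cmod (\<phi> $ a))\<^sup>2)) (Sw a b \<psi>))"
    by (simp add: NN_def Sw_def)
  also have "\<dots> = NN a a"
    unfolding NN_def by (rule mu_inv[OF orth_Sw cont_borel[OF cont_NN]])
  finally show ?thesis ..
qed

lemma NN_swap2:
  fixes a b c :: "'d::finite"
  assumes "a \<noteq> b" "a \<noteq> c"
  shows "NN a b = NN a c"
proof -
  have "NN a c = mu (\<lambda>\<psi>. (\<lambda>\<phi>::complex^'d. complex_of_real ((cmod (\<phi> $ a))\<^sup>2 * (cmod (\<phi> $ b))\<^sup>2)) (Sw b c \<psi>))"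
    using assms by (simp add: NN_def Sw_def)
  also have "\<dots> = NN a b"
    unfolding NN_def by (rule mu_inv[OF orth_Sw cont_borel[OF cont_NN]])
  finally show ?thesis ..
qed

lemma NN_off:
  fixes a b c d :: "'d::finite"
  assumes ab: "a \<noteq> b" and cd: "c \<noteq> d"
  shows "NN a b = NN c d"
proof (cases "c = b")
  case True
  have "NN a b = NN b a" by (rule NN_sym)
  also have "\<dots> = NN b d" using ab cd True by (intro NN_swap2) auto
  finally show ?thesis using True by simp
next
  case False
  have "NN a b = NN b a" by (rule NN_sym)
  also have "\<dots> = NN b c" using ab False by (intro NN_swap2) auto
  also have "\<dots> = NN c b" by (rule NN_sym)
  also have "\<dots> = NN c d" using cd False by (intro NN_swap2) auto
  finally show ?thesis .
qed

lemma mu_sum4: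
  fixes c :: "'d::finite \<Rightarrow> 'd \<Rightarrow> 'd \<Rightarrow> 'd \<Rightarrow> complex"
  assumes "finite J" "finite K" "finite L" "finite M"
  shows "mu (\<lambda>\<psi>. \<Sum>j\<in>J. \<Sum>k\<in>K. \<Sum>l\<in>L. \<Sum>m\<in>M. c j k l m * mon4 j k l m \<psi>)
       = (\<Sum>j\<in>J. \<Sum>k\<in>K. \<Sum>l\<in>L. \<Sum>m\<in>M. c j k l m * mu (mon4 j k l m))"
proof -
  have c1: "continuous_on UNIV (\<lambda>\<psi>. c j k l m * mon4 j k l m \<psi>)" for j k l m
    by (intro continuous_intros cont_mon4)
  have "mu (\<lambda>\<psi>. \<Sum>j\<in>J. \<Sum>k\<in>K. \<Sum>l\<in>L. \<Sum>m\<in>M. c j k l m * mon4 j k l m \<psi>)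
     = (\<Sum>j\<in>J. mu (\<lambda>\<psi>. \<Sum>k\<in>K. \<Sum>l\<in>L. \<Sum>m\<in>M. c j k l m * mon4 j k l m \<psi>))"
    by (rule mu_sum[OF assms(1)]) (intro continuous_on_sum c1)
  also have "\<dots> = (\<Sum>j\<in>J. \<Sum>k\<in>K. mu (\<lambda>\<psi>. \<Sum>l\<in>L. \<Sum>m\<in>M. c j k l m * mon4 j k l m \<psi>))"
    by (intro sum.cong refl mu_sum[OF assms(2)] continuous_on_sum c1)
  also have "\<dots> = (\<Sum>j\<in>J. \<Sum>k\<in>K. \<Sum>l\<in>L. mu (\<lambda>\<psi>. \<Sum>m\<in>M. c j k l m * mon4 j k l m \<psi>))"
    by (intro sum.cong refl mu_sum[OF assms(3)] continuous_on_sum c1)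
  also have "\<dots> = (\<Sum>j\<in>J. \<Sum>k\<in>K. \<Sum>l\<in>L. \<Sum>m\<in>M. mu (\<lambda>\<psi>. c j k l m * mon4 j k l m \<psi>))"
    by (intro sum.cong refl mu_sum[OF assms(4)] continuous_on_sum c1)
  also have "\<dots> = (\<Sum>j\<in>J. \<Sum>k\<in>K. \<Sum>l\<in>L. \<Sum>m\<in>M. c j k l m * mu (mon4 j k l m))"
    by (intro sum.cong refl mu_cmult)
  finally show ?thesis .
qed


lemma sqrt2_sq: "complex_of_real (sqrt 2) * complex_of_real (sqrt 2) = 2"
proof -
  have "complex_of_real (sqrt 2) * complex_of_real (sqrt 2) = complex_of_real (sqrt 2 * sqrt 2)"
    by (simp only: of_real_mult)
  also have "sqrt 2 * sqrt 2 = (2::real)" by simp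
  finally show ?thesis by simp
qed

lemma NN_rot:
  fixes a b :: "'d::finite"
  assumes ab: "a \<noteq> b"
  shows "NN a a = 2 * NN a b"
proof -
  define F where "F = (\<lambda>\<phi>::complex^'d. complex_of_real ((cmod (\<phi> $ a))\<^sup>2 * (cmod (\<phi> $ a))\<^sup>2))"
  have pw: "F (Rt a b \<psi>) = (1/4) * (\<Sum>j\<in>{a,b}. \<Sum>k\<in>{a,b}. \<Sum>l\<in>{a,b}. \<Sum>m\<in>{a,b}. 1 * mon4 j k l m \<psi>)" for \<psi>
  proof -
    define w where "w = (\<psi> $ a + \<psi> $ b) / complex_of_real (sqrt 2)"
    have ra: "Rt a b \<psi> $ a = w"
      unfolding Rt_def w_def by (simp only: vec_lambda_beta if_True simp_thms)
    have "F (Rt a b \<psi>) = (w * cnj w) * (w * cnj w)"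
      unfolding F_def of_real_mult complex_norm_square ra ..
    also have "w * cnj w = (\<psi> $ a + \<psi> $ b) * (cnj (\<psi> $ a) + cnj (\<psi> $ b)) / 2"
      unfolding w_def by (simp add: sqrt2_sq mult_ac)
    finally have e: "F (Rt a b \<psi>) = ((\<psi> $ a + \<psi> $ b) * (cnj (\<psi> $ a) + cnj (\<psi> $ b)) / 2) *
         ((\<psi> $ a + \<psi> $ b) * (cnj (\<psi> $ a) + cnj (\<psi> $ b)) / 2)" .
    have "(\<Sum>j\<in>{a,b}. \<Sum>k\<in>{a,b}. \<Sum>l\<in>{a,b}. \<Sum>m\<in>{a,b}. 1 * mon4 j k l m \<psi>) =
       (cnj (\<psi> $ a) + cnj (\<psi> $ b)) * (\<psi> $ a + \<psi> $ b) * (\<psi> $ a + \<psi> $ b) * (cnj (\<psi> $ a) + cnj (\<psi> $ b))"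
      using ab by (simp add: mon4_def sum.insert distrib_left distrib_right add_ac)
    then show ?thesis unfolding e by (simp add: field_simps)
  qed
  have cF: "continuous_on UNIV F" unfolding F_def by (intro continuous_intros cont_nth)
  have bb: "NN b b = NN a a" by (rule NN_diag)
  have ba: "NN b a = NN a b" by (rule NN_sym)
  have "NN a a = mu F" unfolding NN_def F_def ..
  also have "\<dots> = mu (\<lambda>\<psi>. F (Rt a b \<psi>))"
    by (rule mu_inv[OF orth_Rt[OF ab] cont_borel[OF cF], symmetric])
  also have "\<dots> = (1/4) * mu (\<lambda>\<psi>. \<Sum>j\<in>{a,b}. \<Sum>k\<in>{a,b}. \<Sum>l\<in>{a,b}. \<Sum>m\<in>{a,b}. 1 * mon4 j k l m \<psi>)"
    unfolding pw by (rule mu_cmult)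
  also have "mu (\<lambda>\<psi>. \<Sum>j\<in>{a,b}. \<Sum>k\<in>{a,b}. \<Sum>l\<in>{a,b}. \<Sum>m\<in>{a,b}. 1 * mon4 j k l m \<psi>)
     = (\<Sum>j\<in>{a,b}. \<Sum>k\<in>{a,b}. \<Sum>l\<in>{a,b}. \<Sum>m\<in>{a,b}. 1 * mu (mon4 j k l m))"
    by (rule mu_sum4) simp_all
  also have "\<dots> = 2 * NN a a + 4 * NN a b"
    using ab by (simp add: mu_mon4 bb ba)
  finally show ?thesis by (simp add: field_simps)
qed


definition qf :: "complex^'d^'d \<Rightarrow> complex^'d \<Rightarrow> real" where
  "qf A \<psi> = (cmod (cinner_vec \<psi> (A *v \<psi>)))\<^sup>2"

lemma cinner_mat: "cinner_vec \<psi> (A *v \<psi>) = (\<Sum>j\<in>UNIV. \<Sum>k\<in>UNIV. cnj (\<psi> $ j) * A $ j $ k * \<psi> $ k)"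
  by (simp add: cinner_vec_def matrix_vector_mult_def sum_distrib_left mult.assoc)

lemma cont_qf: "continuous_on UNIV (\<lambda>\<psi>. complex_of_real (qf A \<psi>))"
  unfolding qf_def cinner_mat by (intro continuous_intros cont_nth)

lemma qf_expand:
  "complex_of_real (qf A \<psi>) = (\<Sum>j\<in>UNIV. \<Sum>k\<in>UNIV. \<Sum>l\<in>UNIV. \<Sum>m\<in>UNIV. (A $ j $ k * cnj (A $ l $ m)) * mon4 j k l m \<psi>)"
proof -
  let ?z = "cinner_vec \<psi> (A *v \<psi>)"
  have "complex_of_real (qf A \<psi>) = ?z * cnj ?z" unfolding qf_def complex_norm_square ..
  also have "\<dots> = (\<Sum>j\<in>UNIV. \<Sum>k\<in>UNIV. cnj (\<psi> $ j) * A $ j $ k * \<psi> $ k) *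
      (\<Sum>l\<in>UNIV. \<Sum>m\<in>UNIV. \<psi> $ l * cnj (A $ l $ m) * cnj (\<psi> $ m))"
    unfolding cinner_mat by (simp add: cnj_sum mult_ac)
  also have "\<dots> = (\<Sum>j\<in>UNIV. \<Sum>k\<in>UNIV. \<Sum>l\<in>UNIV. \<Sum>m\<in>UNIV. (A $ j $ k * cnj (A $ l $ m)) * mon4 j k l m \<psi>)"
    unfolding sum_distrib_right unfolding sum_distrib_left
    by (intro sum.cong refl) (simp add: mon4_def mult_ac)
  finally show ?thesis .
qed

definition cc :: "'d::finite itself \<Rightarrow> complex" where
  "cc _ = NN (undefined :: 'd) undefined / 2"

lemma NN_cc:
  fixes j l :: "'d::finite"
  shows "NN j l = cc TYPE('d) * (if j = l then 2 else 1)"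
proof (cases "j = l")
  case True
  then show ?thesis using NN_diag[of j "undefined::'d"] by (simp add: cc_def)
next
  case False
  then show ?thesis using NN_rot[OF False] NN_diag[of j "undefined::'d"] by (simp add: cc_def)
qed

lemma inner_lm:
  fixes A :: "complex^'d::finite^'d"
  shows "(\<Sum>l\<in>UNIV. \<Sum>m\<in>UNIV. (A $ j $ k * cnj (A $ l $ m)) *
           (if k = j \<and> l = m then NN j l else if k = m \<and> l = j then NN j k else 0))
       = (if k = j then cc TYPE('d) * (\<Sum>l\<in>UNIV. A $ j $ j * cnj (A $ l $ l)) else 0)
         + cc TYPE('d) * (A $ j $ k * cnj (A $ j $ k))"
proof (cases "k = j")
  case True
  have "(\<Sum>l\<in>UNIV. \<Sum>m\<in>UNIV. (A $ j $ k * cnj (A $ l $ m)) *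
           (if k = j \<and> l = m then NN j l else if k = m \<and> l = j then NN j k else 0))
      = (\<Sum>l\<in>UNIV. A $ j $ j * cnj (A $ l $ l) * NN j l)"
  proof (intro sum.cong refl)
    fix l
    have "(A $ j $ k * cnj (A $ l $ m)) *
           (if k = j \<and> l = m then NN j l else if k = m \<and> l = j then NN j k else 0)
       = (if m = l then A $ j $ j * cnj (A $ l $ l) * NN j l else 0)" for m
      using True by auto
    then show "(\<Sum>m\<in>UNIV. (A $ j $ k * cnj (A $ l $ m)) *
           (if k = j \<and> l = m then NN j l else if k = m \<and> l = j then NN j k else 0))
       = A $ j $ j * cnj (A $ l $ l) * NN j l"
      by simp
  qed
  also have "\<dots> = (\<Sum>l\<in>UNIV. cc TYPE('d) * (A $ j $ j * cnj (A $ l $ l)) + (if l = j then cc TYPE('d) * (A $ j $ j * cnj (A $ j $ j)) else 0))"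
    by (intro sum.cong refl) (auto simp: NN_cc algebra_simps)
  also have "\<dots> = cc TYPE('d) * (\<Sum>l\<in>UNIV. A $ j $ j * cnj (A $ l $ l)) + cc TYPE('d) * (A $ j $ j * cnj (A $ j $ j))"
    by (simp add: sum.distrib sum_distrib_left)
  finally show ?thesis using True by simp
next
  case False
  have "(\<Sum>l\<in>UNIV. \<Sum>m\<in>UNIV. (A $ j $ k * cnj (A $ l $ m)) *
           (if k = j \<and> l = m then NN j l else if k = m \<and> l = j then NN j k else 0))
      = (\<Sum>l\<in>UNIV. if l = j then (\<Sum>m\<in>UNIV. if m = k then (A $ j $ k * cnj (A $ j $ k)) * NN j k else 0) else 0)"
  proof (intro sum.cong refl)
    fix l
    show "(\<Sum>m\<in>UNIV. (A $ j $ k * cnj (A $ l $ m)) *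
           (if k = j \<and> l = m then NN j l else if k = m \<and> l = j then NN j k else 0))
       = (if l = j then (\<Sum>m\<in>UNIV. if m = k then (A $ j $ k * cnj (A $ j $ k)) * NN j k else 0) else 0)"
    proof (cases "l = j")
      case True
      have "(\<Sum>m\<in>UNIV. (A $ j $ k * cnj (A $ l $ m)) *
           (if k = j \<and> l = m then NN j l else if k = m \<and> l = j then NN j k else 0))
         = (\<Sum>m\<in>UNIV. if m = k then (A $ j $ k * cnj (A $ j $ k)) * NN j k else 0)"
        by (rule sum.cong[OF refl]) (use True False in auto)
      then show ?thesis using True by (simp only: if_True simp_thms)
    next
      case F2: False
      then show ?thesis using False by simp
    qed
  qed
  also have "\<dots> = (A $ j $ k * cnj (A $ j $ k)) * NN j k"
    by simp
  also have "\<dots> = cc TYPE('d) * (A $ j $ k * cnj (A $ j $ k))"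
    using False by (simp add: NN_cc)
  finally show ?thesis using False by simp
qed

lemma mu_qf:
  fixes A :: "complex^'d::finite^'d"
  shows "mu (\<lambda>\<psi>. complex_of_real (qf A \<psi>)) = cc TYPE('d) *
     ((\<Sum>j\<in>UNIV. A $ j $ j) * cnj (\<Sum>l\<in>UNIV. A $ l $ l) + (\<Sum>j\<in>UNIV. \<Sum>k\<in>UNIV. A $ j $ k * cnj (A $ j $ k)))"
proof -
  have "mu (\<lambda>\<psi>. complex_of_real (qf A \<psi>)) = mu (\<lambda>\<psi>. \<Sum>j\<in>UNIV. \<Sum>k\<in>UNIV. \<Sum>l\<in>UNIV. \<Sum>m\<in>UNIV. (A $ j $ k * cnj (A $ l $ m)) * mon4 j k l m \<psi>)"
    unfolding qf_expand ..
  also have "\<dots> = (\<Sum>j\<in>UNIV. \<Sum>k\<in>UNIV. \<Sum>l\<in>UNIV. \<Sum>m\<in>UNIV. (A $ j $ k * cnj (A $ l $ m)) * mu (mon4 j k l m))"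
    by (rule mu_sum4) simp_all
  also have "\<dots> = (\<Sum>j\<in>UNIV. \<Sum>k\<in>UNIV. (if k = j then cc TYPE('d) * (\<Sum>l\<in>UNIV. A $ j $ j * cnj (A $ l $ l)) else 0)
         + cc TYPE('d) * (A $ j $ k * cnj (A $ j $ k)))"
    unfolding mu_mon4 by (intro sum.cong refl inner_lm)
  also have "\<dots> = (\<Sum>j\<in>UNIV. cc TYPE('d) * (\<Sum>l\<in>UNIV. A $ j $ j * cnj (A $ l $ l)))
         + cc TYPE('d) * (\<Sum>j\<in>UNIV. \<Sum>k\<in>UNIV. A $ j $ k * cnj (A $ j $ k))"
    by (simp add: sum.distrib sum_distrib_left)
  also have "\<dots> = cc TYPE('d) *
     ((\<Sum>j\<in>UNIV. \<Sum>l\<in>UNIV. A $ j $ j * cnj (A $ l $ l)) + (\<Sum>j\<in>UNIV. \<Sum>k\<in>UNIV. A $ j $ k * cnj (A $ j $ k)))"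
    by (simp only: sum_distrib_left distrib_left)
  also have "\<dots> = cc TYPE('d) *
     ((\<Sum>j\<in>UNIV. A $ j $ j) * cnj (\<Sum>l\<in>UNIV. A $ l $ l) + (\<Sum>j\<in>UNIV. \<Sum>k\<in>UNIV. A $ j $ k * cnj (A $ j $ k)))"
    by (simp only: cnj_sum sum_product)
  finally show ?thesis .
qed

definition rint :: "(complex^'d::finite \<Rightarrow> real) \<Rightarrow> real" where
  "rint f = integral\<^sup>L lebesgue (\<lambda>x. indicator (ball (0::complex^'d) 1) x *\<^sub>R f (x /\<^sub>R norm x))"

lemma mu_of_real:
  fixes f :: "complex^'d::finite \<Rightarrow> real"
  shows "mu (\<lambda>\<psi>. complex_of_real (f \<psi>)) = complex_of_real (rint f)"
proof -
  have "(\<lambda>x. indicator (ball (0::complex^'d) 1) x *\<^sub>R complex_of_real (f (x /\<^sub>R norm x)))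
      = (\<lambda>x. complex_of_real (indicator (ball (0::complex^'d) 1) x *\<^sub>R f (x /\<^sub>R norm x)))"
    by (rule ext) (simp add: scaleR_conv_of_real)
  then show ?thesis unfolding mu_def rint_def by (simp only: integral_complex_of_real)
qed

definition ccr :: "'d::finite itself \<Rightarrow> real" where
  "ccr t = rint (\<lambda>\<psi>::complex^'d. (cmod (\<psi> $ undefined))\<^sup>2 * (cmod (\<psi> $ undefined))\<^sup>2) / 2"

lemma cc_ccr: "cc TYPE('d::finite) = complex_of_real (ccr TYPE('d))"
  unfolding cc_def ccr_def NN_def mu_of_real by simp

lemma ccr_nonneg: "0 \<le> ccr TYPE('d::finite)"
  unfolding ccr_def rint_def
  by (intro divide_nonneg_pos Bochner_Integration.integral_nonneg) (auto simp: indicator_def)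

lemma rint_qf:
  fixes A :: "complex^'d::finite^'d"
  shows "rint (qf A) = ccr TYPE('d) * ((cmod (\<Sum>j\<in>UNIV. A $ j $ j))\<^sup>2 + (\<Sum>j\<in>UNIV. \<Sum>k\<in>UNIV. (cmod (A $ j $ k))\<^sup>2))"
proof -
  have "complex_of_real (rint (qf A)) = complex_of_real (ccr TYPE('d) * ((cmod (\<Sum>j\<in>UNIV. A $ j $ j))\<^sup>2 + (\<Sum>j\<in>UNIV. \<Sum>k\<in>UNIV. (cmod (A $ j $ k))\<^sup>2)))"
    unfolding mu_of_real[symmetric] mu_qf cc_ccr
    unfolding of_real_mult of_real_add of_real_sum complex_norm_square ..
  then show ?thesis by (simp only: of_real_eq_iff)
qed

lemma rint_sum2:
  assumes "finite B" "\<And>b. b \<in> B \<Longrightarrow> finite (I b)"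
  shows "rint (\<lambda>\<psi>. \<Sum>b\<in>B. \<Sum>i\<in>I b. qf (A b i) \<psi>) = (\<Sum>b\<in>B. \<Sum>i\<in>I b. rint (qf (A b i)))"
proof -
  have "complex_of_real (rint (\<lambda>\<psi>. \<Sum>b\<in>B. \<Sum>i\<in>I b. qf (A b i) \<psi>))
      = mu (\<lambda>\<psi>. \<Sum>b\<in>B. \<Sum>i\<in>I b. complex_of_real (qf (A b i) \<psi>))"
    unfolding mu_of_real[symmetric] of_real_sum ..
  also have "\<dots> = (\<Sum>b\<in>B. mu (\<lambda>\<psi>. \<Sum>i\<in>I b. complex_of_real (qf (A b i) \<psi>)))"
    by (rule mu_sum[OF assms(1)]) (intro continuous_on_sum cont_qf)
  also have "\<dots> = (\<Sum>b\<in>B. \<Sum>i\<in>I b. mu (\<lambda>\<psi>. complex_of_real (qf (A b i) \<psi>)))"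
    by (intro sum.cong refl mu_sum assms(2) cont_qf)
  also have "\<dots> = complex_of_real (\<Sum>b\<in>B. \<Sum>i\<in>I b. rint (qf (A b i)))"
    unfolding mu_of_real of_real_sum ..
  finally show ?thesis by (simp only: of_real_eq_iff)
qed

lemma sphere_avg_rint:
  fixes f :: "complex^'d::finite \<Rightarrow> real"
  shows "sphere_avg f = rint f / measure lebesgue (ball (0::complex^'d) 1)"
  unfolding sphere_avg_def rint_def set_lebesgue_integral_def ..


lemma cinner_add_right: "cinner_vec x (y + z) = cinner_vec x y + cinner_vec x z"
  by (simp add: cinner_vec_def distrib_left sum.distrib)
lemma cinner_add_left: "cinner_vec (x + y) z = cinner_vec x z + cinner_vec y z"
  by (simp add: cinner_vec_def distrib_right sum.distrib)
lemma cinner_diff_right: "cinner_vec x (y - z) = cinner_vec x y - cinner_vec x z"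
  by (simp add: cinner_vec_def right_diff_distrib sum_subtractf)
lemma cinner_diff_left: "cinner_vec (x - y) z = cinner_vec x z - cinner_vec y z"
  by (simp add: cinner_vec_def left_diff_distrib sum_subtractf)
lemma cinner_smult_right: "cinner_vec x (c *s y) = c * cinner_vec x y"
  by (simp add: cinner_vec_def sum_distrib_left mult_ac)
lemma cinner_smult_left: "cinner_vec (c *s x) y = cnj c * cinner_vec x y"
  by (simp add: cinner_vec_def sum_distrib_left mult_ac)
lemma cinner_sum_right: "cinner_vec x (\<Sum>u\<in>S. f u) = (\<Sum>u\<in>S. cinner_vec x (f u))"
  unfolding cinner_vec_def by (simp add: sum_distrib_left) (rule sum.swap)
lemma cinner_sum_left: "cinner_vec (\<Sum>u\<in>S. f u) y = (\<Sum>u\<in>S. cinner_vec (f u) y)"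
  unfolding cinner_vec_def by (simp add: cnj_sum sum_distrib_right) (rule sum.swap)
lemma cinner_zero_right[simp]: "cinner_vec x 0 = 0"
  by (simp add: cinner_vec_def)
lemma cinner_zero_left[simp]: "cinner_vec 0 x = 0"
  by (simp add: cinner_vec_def)
lemma cinner_cnj: "cinner_vec y x = cnj (cinner_vec x y)"
  by (simp add: cinner_vec_def cnj_sum mult.commute)
lemma cinner_adj: "cinner_vec x (A *v y) = cinner_vec (adj A *v x) y"
proof -
  have 1: "cinner_vec x (A *v y) = (\<Sum>i\<in>UNIV. \<Sum>j\<in>UNIV. cnj (x$i) * A$i$j * y$j)"
    by (simp add: cinner_vec_def matrix_vector_mult_def sum_distrib_left mult.assoc)
  have 2: "cinner_vec (adj A *v x) y = (\<Sum>j\<in>UNIV. \<Sum>i\<in>UNIV. cnj (x$i) * A$i$j * y$j)"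
    by (simp add: cinner_vec_def matrix_vector_mult_def adj_def cnj_sum sum_distrib_left sum_distrib_right mult_ac)
  show ?thesis unfolding 1 2 by (rule sum.swap)
qed
lemma cinner_self: "cinner_vec x x = of_real (\<Sum>i\<in>UNIV. (cmod (x $ i))\<^sup>2)"
  unfolding cinner_vec_def of_real_sum complex_norm_square by (rule sum.cong) (simp_all add: mult.commute)
lemma cinner_self_Re: "Re (cinner_vec x x) = (\<Sum>i\<in>UNIV. (cmod (x $ i))\<^sup>2)"
  by (simp add: cinner_self)
lemma cinner_self_Im: "Im (cinner_vec x x) = 0"
  by (simp add: cinner_self)
lemma cinner_self_nonneg: "0 \<le> Re (cinner_vec x x)"
  by (simp add: cinner_self_Re sum_nonneg)
lemma cinner_self_eq0: "Re (cinner_vec x x) = 0 \<longleftrightarrow> x = 0"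
  by (simp add: cinner_self_Re sum_nonneg_eq_0_iff vec_eq_iff)
lemma norm_cinner: "(norm x)\<^sup>2 = Re (cinner_vec x x)"
  by (simp add: cinner_self_Re norm_vec_def L2_set_def sum_nonneg)
lemma inner_cinner: "x \<bullet> y = Re (cinner_vec x y)"
  by (simp add: inner_vec_def cinner_vec_def inner_complex_def Re_sum)
lemma scaleR_smult: "r *\<^sub>R x = complex_of_real r *s (x::complex^'d)"
proof -
  have "\<And>z::complex. r *\<^sub>R z = complex_of_real r * z" by (simp add: scaleR_conv_of_real)
  then show ?thesis unfolding vec_eq_iff by simp
qed
lemma mv_smult: "A *v (c *s x) = c *s (A *v (x::complex^'d))"
  by (rule vector_scalar_commute)
lemma mv_sum: "A *v (\<Sum>u\<in>S. f u) = (\<Sum>u\<in>S. A *v (f u :: complex^'d))"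
  by (induction S rule: infinite_finite_induct) (auto simp: matrix_vector_right_distrib)
lemma sum_axis_r: "(\<Sum>i\<in>UNIV. f i * axis k (1::complex) $ i) = f (k::'d::finite)"
proof -
  have "(\<Sum>i\<in>UNIV. f i * axis k (1::complex) $ i) = (\<Sum>i\<in>UNIV. if i = k then f k else 0)"
    by (rule sum.cong) (auto simp: axis_def)
  then show ?thesis by simp
qed
lemma sum_axis_l: "(\<Sum>i\<in>UNIV. cnj (axis k (1::complex) $ i) * f i) = f (k::'d::finite)"
proof -
  have "(\<Sum>i\<in>UNIV. cnj (axis k (1::complex) $ i) * f i) = (\<Sum>i\<in>UNIV. if i = k then f k else 0)"
    by (rule sum.cong) (auto simp: axis_def)
  then show ?thesis by simp
qed
lemma mv_axis: "(A *v axis k (1::complex)) $ j = A $ j $ (k::'d::finite)"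
  unfolding matrix_vector_mult_def by (simp add: sum_axis_r)
lemma cinner_axis_left: "cinner_vec (axis j 1) y = y $ j"
  unfolding cinner_vec_def by (rule sum_axis_l)
lemma cinner_axis_mat: "cinner_vec (axis j 1) (A *v axis k 1) = A $ j $ k"
  by (simp add: cinner_axis_left mv_axis)

lemma q_expand:
  "cinner_vec (a + c *s b) (A *v (a + c *s b)) = cinner_vec a (A *v a) + c * cinner_vec a (A *v b)
     + cnj c * cinner_vec b (A *v a) + cnj c * c * cinner_vec b (A *v b)"
  unfolding matrix_vector_right_distrib mv_smult cinner_add_left cinner_add_right
      cinner_smult_left cinner_smult_right by (simp add: algebra_simps)

lemma psd_hermitian:
  assumes "psd A"
  shows "adj A = A"
proof -
  have im: "Im (cinner_vec x (A *v x)) = 0" for x using assms psd_def by blast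
  have d: "Im (A $ j $ j) = 0" for j using im[of "axis j 1"] by (simp add: cinner_axis_mat)
  have h: "A $ k $ j = cnj (A $ j $ k)" for j k
  proof -
    have e1: "cinner_vec (axis j 1 + 1 *s axis k 1) (A *v (axis j 1 + 1 *s axis k 1)) = A$j$j + A$j$k + A$k$j + A$k$k"
      unfolding q_expand cinner_axis_mat by simp
    have e2: "cinner_vec (axis j 1 + \<i> *s axis k 1) (A *v (axis j 1 + \<i> *s axis k 1)) = A$j$j + \<i> * A$j$k - \<i> * A$k$j + A$k$k"
      unfolding q_expand cinner_axis_mat by simp
    have "Im (A$j$k + A$k$j) = 0" using im[of "axis j 1 + 1 *s axis k 1"] d[of j] d[of k] unfolding e1 by simp
    moreover have "Re (A$j$k - A$k$j) = 0" using im[of "axis j 1 + \<i> *s axis k 1"] d[of j] d[of k] unfolding e2 by simp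
    ultimately show ?thesis by (simp add: complex_eq_iff)
  qed
  show ?thesis unfolding adj_def vec_eq_iff
  proof (intro allI)
    fix j k
    show "(\<chi> i j. cnj (A $ j $ i)) $ j $ k = A $ j $ k" using h[of k j] by simp
  qed
qed


lemma quad_zero:
  fixes a b :: real
  assumes H: "\<And>t. a * t + b * t\<^sup>2 \<le> 0"
  shows "a = 0"
proof (rule ccontr)
  assume a: "a \<noteq> 0"
  define c where "c = \<bar>b\<bar> + 1"
  have pos: "0 < c" by (simp add: c_def)
  define t where "t = a / (2 * c)"
  have 1: "a * t - (c - 1) * t\<^sup>2 \<le> a * t + b * t\<^sup>2"
  proof -
    have "- \<bar>b\<bar> * t\<^sup>2 \<le> b * t\<^sup>2" by (intro mult_right_mono) auto
    then show ?thesis by (simp add: c_def)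
  qed
  have 2: "a * t - (c - 1) * t\<^sup>2 = a\<^sup>2 * (c + 1) / (4 * c\<^sup>2)"
    unfolding t_def using pos by (simp add: field_simps power2_eq_square)
  have 3: "a\<^sup>2 * (c + 1) / (4 * c\<^sup>2) > 0" using a pos by (intro divide_pos_pos mult_pos_pos) auto
  show False using 1 2 3 H[of t] by linarith
qed
definition ONE :: "complex^'d^'d \<Rightarrow> (complex^'d) set \<Rightarrow> bool" where
  "ONE F E \<longleftrightarrow> finite E \<and> (\<forall>u\<in>E. \<forall>v\<in>E. cinner_vec u v = (if u = v then 1 else 0))
     \<and> (\<forall>u\<in>E. F *v u = cinner_vec u (F *v u) *s u)"

definition Wc :: "(complex^'d) set \<Rightarrow> (complex^'d) set" where
  "Wc E = {x. \<forall>u\<in>E. cinner_vec u x = 0}"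

lemma cont_nth': "continuous_on UNIV (\<lambda>\<psi>::complex^'d. \<psi> $ j)"
  by (intro linear_continuous_on bounded_linear_vec_nth bounded_linear_ident)

lemma cinner_mat_expand: "cinner_vec \<psi> (A *v \<phi>) = (\<Sum>j\<in>UNIV. \<Sum>k\<in>UNIV. cnj (\<psi> $ j) * A $ j $ k * \<phi> $ k)"
  by (simp add: cinner_vec_def matrix_vector_mult_def sum_distrib_left mult.assoc)

lemma cont_cinner_r: "continuous_on UNIV (\<lambda>x. cinner_vec u (x::complex^'d))"
  unfolding cinner_vec_def by (intro continuous_intros cont_nth')

lemma cont_q: "continuous_on UNIV (\<lambda>x. Re (cinner_vec x (F *v (x::complex^'d))))"
  unfolding cinner_mat_expand by (intro continuous_intros cont_nth')

lemma closed_Wc: "closed (Wc E)"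
proof -
  have "Wc E = (\<Inter>u\<in>E. {x. cinner_vec u x = 0})" by (auto simp: Wc_def)
  moreover have "closed {x. cinner_vec u x = 0}" for u
    by (rule closed_Collect_eq[OF cont_cinner_r continuous_on_const])
  ultimately show ?thesis by auto
qed

lemma Wc_add: "x \<in> Wc E \<Longrightarrow> y \<in> Wc E \<Longrightarrow> x + y \<in> Wc E"
  by (simp add: Wc_def cinner_add_right)
lemma Wc_smult: "x \<in> Wc E \<Longrightarrow> c *s x \<in> Wc E"
  by (simp add: Wc_def cinner_smult_right)
lemma Wc_scaleR: "x \<in> Wc E \<Longrightarrow> r *\<^sub>R x \<in> Wc E"
  by (simp add: scaleR_smult Wc_smult)

lemma cinner_scaleR_both: "cinner_vec (r *\<^sub>R x) (A *v (r *\<^sub>R x)) = of_real (r\<^sup>2) * cinner_vec x (A *v x)"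
  by (simp add: scaleR_smult mv_smult cinner_smult_left cinner_smult_right power2_eq_square)

lemma eig_step:
  fixes F :: "complex^'d^'d"
  assumes herm: "adj F = F" and E: "ONE F E" and x: "x \<in> Wc E" "x \<noteq> 0"
  shows "\<exists>v. v \<in> Wc E \<and> cinner_vec v v = 1 \<and> F *v v = cinner_vec v (F *v v) *s v"
proof -
  define q where "q y = Re (cinner_vec y (F *v y))" for y
  define K where "K = Wc E \<inter> sphere 0 1"
  have cK: "compact K" unfolding K_def by (intro closed_Int_compact closed_Wc compact_sphere)
  have x0: "x /\<^sub>R norm x \<in> K" using x by (auto simp: K_def Wc_scaleR)
  then have neK: "K \<noteq> {}" by blast
  have cq: "continuous_on K q" unfolding q_def by (rule continuous_on_subset[OF cont_q]) simp
  obtain v where vK: "v \<in> K" and vmax: "\<And>y. y \<in> K \<Longrightarrow> q y \<le> q v"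
    using continuous_attains_sup[OF cK neK cq] by blast
  define lam where "lam = q v"
  have vW: "v \<in> Wc E" and nv: "norm v = 1" using vK by (auto simp: K_def)
  have vv: "cinner_vec v v = 1"
  proof -
    have "Re (cinner_vec v v) = 1" using nv norm_cinner[of v] by simp
    then show ?thesis using cinner_self_Im[of v] by (simp add: complex_eq_iff)
  qed
  have bound: "q y \<le> lam * Re (cinner_vec y y)" if yW: "y \<in> Wc E" for y
  proof (cases "y = 0")
    case True then show ?thesis by (simp add: q_def)
  next
    case False
    define n where "n = norm y"
    have n: "n > 0" using False by (simp add: n_def)
    have "(1/n) *\<^sub>R y \<in> K" using yW n by (auto simp: K_def Wc_scaleR n_def)
    then have "q ((1/n) *\<^sub>R y) \<le> lam" using vmax lam_def by blast
    moreover have "q ((1/n) *\<^sub>R y) = q y / n\<^sup>2"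
      unfolding q_def cinner_scaleR_both by (simp add: power_divide)
    ultimately have "q y \<le> lam * n\<^sup>2" using n by (simp add: divide_le_eq)
    then show ?thesis using norm_cinner[of y] by (simp add: n_def)
  qed
  have Fv_w: "Re (cinner_vec w (F *v v - of_real lam *s v)) = 0" if wW: "w \<in> Wc E" for w
  proof -
    define z where "z = cinner_vec w (F *v v)"
    have h1: "cinner_vec v (F *v w) = cnj z"
      unfolding z_def cinner_adj[of v F w] herm by (rule cinner_cnj)
    have "\<And>t::real. 2 * (Re z - lam * Re (cinner_vec w v)) * t + (q w - lam * Re (cinner_vec w w)) * t\<^sup>2 \<le> 0"
    proof -
      fix t :: real
      have yW: "v + of_real t *s w \<in> Wc E" by (intro Wc_add vW Wc_smult wW)
      have e1: "q (v + of_real t *s w) = lam + 2 * t * Re z + t\<^sup>2 * q w"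
        unfolding q_def q_expand h1 by (simp add: lam_def q_def z_def power2_eq_square)
      have e2: "Re (cinner_vec (v + of_real t *s w) (v + of_real t *s w)) = 1 + 2 * t * Re (cinner_vec w v) + t\<^sup>2 * Re (cinner_vec w w)"
        using q_expand[of v "of_real t" w "mat 1"] vv
        by (simp add: power2_eq_square cinner_cnj[of v w])
      show "2 * (Re z - lam * Re (cinner_vec w v)) * t + (q w - lam * Re (cinner_vec w w)) * t\<^sup>2 \<le> 0"
        using bound[OF yW] unfolding e1 e2 by (simp add: algebra_simps)
    qed
    then have "Re z - lam * Re (cinner_vec w v) = 0"
      using quad_zero[of "2 * (Re z - lam * Re (cinner_vec w v))" "q w - lam * Re (cinner_vec w w)"] by simp
    then show ?thesis by (simp add: cinner_diff_right cinner_smult_right z_def)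
  qed
  define g where "g = F *v v - of_real lam *s v"
  have gW: "g \<in> Wc E"
    unfolding Wc_def mem_Collect_eq
  proof
    fix u assume uE: "u \<in> E"
    have ue: "F *v u = cinner_vec u (F *v u) *s u" using E uE by (simp add: ONE_def)
    have uv: "cinner_vec u v = 0" using vW uE by (simp add: Wc_def)
    have "cinner_vec u (F *v v) = cinner_vec (F *v u) v" using cinner_adj[of u F v] herm by simp
    also have "\<dots> = 0" by (subst ue) (simp add: cinner_smult_left uv)
    finally show "cinner_vec u g = 0" by (simp add: g_def cinner_diff_right cinner_smult_right uv)
  qed
  have "Re (cinner_vec g g) = 0" using Fv_w[OF gW] by (simp add: g_def)
  then have g0: "g = 0" by (simp add: cinner_self_eq0)
  then have Fv: "F *v v = of_real lam *s v" by (simp add: g_def)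
  then have "cinner_vec v (F *v v) = of_real lam" by (simp add: cinner_smult_right vv)
  then show ?thesis using vW vv Fv by auto
qed

lemma ONE_card:
  fixes E :: "(complex^'d::finite) set"
  assumes "ONE F E"
  shows "card E \<le> DIM(complex^'d)"
proof -
  have on: "\<And>u v. u \<in> E \<Longrightarrow> v \<in> E \<Longrightarrow> cinner_vec u v = (if u = v then 1 else 0)"
    using assms by (simp add: ONE_def)
  have "pairwise orthogonal E"
    unfolding pairwise_def orthogonal_def inner_cinner using on by simp
  moreover have "(0::complex^'d) \<notin> E" using on[of 0 0] by auto
  ultimately have "independent E" by (rule pairwise_orthogonal_independent)
  then show ?thesis using independent_bound by blast
qed

lemma expansion_Wc:
  assumes E: "ONE F E"
  shows "x - (\<Sum>u\<in>E. cinner_vec u x *s u) \<in> Wc E"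
  unfolding Wc_def mem_Collect_eq
proof
  fix u' assume u': "u' \<in> E"
  have fin: "finite E" using E by (simp add: ONE_def)
  have on: "\<And>u. u \<in> E \<Longrightarrow> cinner_vec u' u = (if u' = u then 1 else 0)"
    using E u' by (simp add: ONE_def)
  have "cinner_vec u' (\<Sum>u\<in>E. cinner_vec u x *s u) = (\<Sum>u\<in>E. if u' = u then cinner_vec u x else 0)"
    unfolding cinner_sum_right cinner_smult_right by (intro sum.cong refl) (simp add: on)
  also have "\<dots> = cinner_vec u' x" using fin u' by simp
  finally show "cinner_vec u' (x - (\<Sum>u\<in>E. cinner_vec u x *s u)) = 0"
    by (simp add: cinner_diff_right)
qed

lemma spectral:
  fixes F :: "complex^'d^'d"
  assumes herm: "adj F = F"
  shows "\<exists>E. ONE F E \<and> (\<forall>x. x = (\<Sum>u\<in>E. cinner_vec u x *s u))"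
proof -
  define P where "P n \<longleftrightarrow> (\<exists>E. ONE F E \<and> card E = n)" for n
  have P0: "P 0" unfolding P_def by (rule exI[of _ "{}"]) (simp add: ONE_def)
  have Pb: "\<forall>n. P n \<longrightarrow> n \<le> DIM(complex^'d)" unfolding P_def using ONE_card by blast
  obtain n where Pn: "P n" and nmax: "\<And>m. P m \<Longrightarrow> m \<le> n"
    using Nat.ex_has_greatest_nat[OF P0 Pb] by blast
  obtain E where E: "ONE F E" and cE: "card E = n" using Pn P_def by blast
  have fin: "finite E" using E by (simp add: ONE_def)
  have W0: "Wc E = {0}"
  proof (rule ccontr)
    assume "Wc E \<noteq> {0}"
    moreover have "0 \<in> Wc E" by (simp add: Wc_def)
    ultimately obtain x where x: "x \<in> Wc E" "x \<noteq> 0" by blast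
    obtain v where v: "v \<in> Wc E" "cinner_vec v v = 1" "F *v v = cinner_vec v (F *v v) *s v"
      using eig_step[OF herm E x] by blast
    have vE: "v \<notin> E" using v(1,2) by (auto simp: Wc_def)
    have "ONE F (insert v E)"
      unfolding ONE_def
    proof (intro conjI ballI)
      show "finite (insert v E)" using fin by simp
      fix u w assume u: "u \<in> insert v E" and w: "w \<in> insert v E"
      have uv: "\<And>a. a \<in> E \<Longrightarrow> cinner_vec a v = 0" using v(1) by (simp add: Wc_def)
      have vu: "\<And>a. a \<in> E \<Longrightarrow> cinner_vec v a = 0" using uv cinner_cnj[of v] by simp
      show "cinner_vec u w = (if u = w then 1 else 0)"
        using u w E v(2) uv vu vE by (auto simp: ONE_def)
    next
      fix u assume "u \<in> insert v E"
      then show "F *v u = cinner_vec u (F *v u) *s u" using E v(3) by (auto simp: ONE_def)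
    qed
    then have "P (Suc n)" unfolding P_def using fin vE cE by (intro exI[of _ "insert v E"]) simp
    then show False using nmax by fastforce
  qed
  have "\<forall>x. x = (\<Sum>u\<in>E. cinner_vec u x *s u)"
  proof
    fix x
    have "x - (\<Sum>u\<in>E. cinner_vec u x *s u) \<in> Wc E" by (rule expansion_Wc[OF E])
    then show "x = (\<Sum>u\<in>E. cinner_vec u x *s u)" using W0 by simp
  qed
  then show ?thesis using E by blast
qed


definition sv :: "complex^'d^'d \<Rightarrow> complex^'d \<Rightarrow> real" where
  "sv F u = sqrt (max 0 (Re (cinner_vec u (F *v u))))"

definition Smat :: "(complex^'d) set \<Rightarrow> complex^'d^'d \<Rightarrow> complex^'d^'d" where
  "Smat E F = (\<chi> j k. \<Sum>u\<in>E. of_real (sv F u) * u $ j * cnj (u $ k))"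

lemma Smat_apply: "Smat E F *v x = (\<Sum>u\<in>E. (of_real (sv F u) * cinner_vec u x) *s u)"
proof -
  have "(Smat E F *v x) $ j = (\<Sum>u\<in>E. (of_real (sv F u) * cinner_vec u x) *s u) $ j" for j
  proof -
    have "(Smat E F *v x) $ j = (\<Sum>k\<in>UNIV. \<Sum>u\<in>E. of_real (sv F u) * u $ j * cnj (u $ k) * x $ k)"
      by (simp add: Smat_def matrix_vector_mult_def sum_distrib_right)
    also have "\<dots> = (\<Sum>u\<in>E. \<Sum>k\<in>UNIV. of_real (sv F u) * u $ j * cnj (u $ k) * x $ k)"
      by (rule sum.swap)
    also have "\<dots> = (\<Sum>u\<in>E. (of_real (sv F u) * cinner_vec u x) *s u) $ j"
      by (simp add: cinner_vec_def sum_distrib_left sum_distrib_right mult_ac)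
    finally show ?thesis .
  qed
  then show ?thesis by (simp add: vec_eq_iff)
qed

lemma ONE_on: "ONE F E \<Longrightarrow> u \<in> E \<Longrightarrow> v \<in> E \<Longrightarrow> cinner_vec u v = (if u = v then 1 else 0)"
  by (simp add: ONE_def)

lemma cinner_Smat: "ONE F E \<Longrightarrow> u \<in> E \<Longrightarrow> cinner_vec u (Smat E F *v x) = of_real (sv F u) * cinner_vec u x"
proof -
  assume E: "ONE F E" and u: "u \<in> E"
  have fin: "finite E" using E by (simp add: ONE_def)
  have "cinner_vec u (Smat E F *v x) = (\<Sum>v\<in>E. if u = v then of_real (sv F v) * cinner_vec v x else 0)"
    unfolding Smat_apply cinner_sum_right cinner_smult_right
    by (intro sum.cong refl) (simp add: ONE_on[OF E u])
  also have "\<dots> = of_real (sv F u) * cinner_vec u x" using fin u by simp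
  finally show ?thesis .
qed

lemma eig_real:
  assumes "psd F"
  shows "cinner_vec u (F *v u) = of_real ((sv F u)\<^sup>2)"
proof -
  have "Im (cinner_vec u (F *v u)) = 0" "0 \<le> Re (cinner_vec u (F *v u))"
    using assms by (auto simp: psd_def)
  then show ?thesis by (simp add: sv_def complex_eq_iff)
qed

lemma sv_nonneg: "0 \<le> sv F u" by (simp add: sv_def)

lemma Smat_psd: "ONE F E \<Longrightarrow> psd (Smat E F)"
proof -
  assume E: "ONE F E"
  have "cinner_vec x (Smat E F *v x) = of_real (\<Sum>u\<in>E. sv F u * (cmod (cinner_vec u x))\<^sup>2)" for x
  proof -
    have "cinner_vec x (Smat E F *v x) = (\<Sum>u\<in>E. of_real (sv F u) * (cinner_vec u x * cnj (cinner_vec u x)))"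
      unfolding Smat_apply cinner_sum_right cinner_smult_right
      by (intro sum.cong refl) (simp add: cinner_cnj[of x] mult_ac)
    also have "\<dots> = of_real (\<Sum>u\<in>E. sv F u * (cmod (cinner_vec u x))\<^sup>2)"
      unfolding of_real_sum of_real_mult complex_norm_square ..
    finally show ?thesis .
  qed
  then show ?thesis unfolding psd_def by (simp add: sum_nonneg sv_nonneg)
qed

lemma Smat_herm: "adj (Smat E F) = Smat E F"
  by (simp add: adj_def Smat_def vec_eq_iff cnj_sum mult_ac)

lemma expand_apply:
  assumes E: "ONE F E" and ex: "\<And>x. x = (\<Sum>u\<in>E. cinner_vec u x *s u)"
  shows "A *v x = (\<Sum>u\<in>E. cinner_vec u x *s (A *v u))"
proof -
  have "A *v x = A *v (\<Sum>u\<in>E. cinner_vec u x *s u)" using ex[of x] by simp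
  also have "\<dots> = (\<Sum>u\<in>E. cinner_vec u x *s (A *v u))" by (simp add: mv_sum mv_smult)
  finally show ?thesis .
qed

lemma Smat_sq:
  assumes F: "psd F" and E: "ONE F E" and ex: "\<And>x. x = (\<Sum>u\<in>E. cinner_vec u x *s u)"
  shows "Smat E F ** Smat E F = F"
proof -
  have "(Smat E F ** Smat E F) *v x = F *v x" for x
  proof -
    have "(Smat E F ** Smat E F) *v x = Smat E F *v (Smat E F *v x)" by (simp add: matrix_vector_mul_assoc)
    also have "\<dots> = (\<Sum>u\<in>E. (of_real (sv F u) * (of_real (sv F u) * cinner_vec u x)) *s u)"
      unfolding Smat_apply[of E F "Smat E F *v x"]
      by (intro sum.cong refl) (simp add: cinner_Smat[OF E])
    also have "\<dots> = (\<Sum>u\<in>E. cinner_vec u x *s (F *v u))"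
    proof (intro sum.cong refl)
      fix u assume u: "u \<in> E"
      have "F *v u = cinner_vec u (F *v u) *s u" using E u by (simp add: ONE_def)
      then show "(of_real (sv F u) * (of_real (sv F u) * cinner_vec u x)) *s u = cinner_vec u x *s (F *v u)"
        by (simp add: eig_real[OF F] vector_smult_assoc power2_eq_square mult_ac)
    qed
    also have "\<dots> = F *v x" by (rule expand_apply[OF E ex, symmetric])
    finally show ?thesis .
  qed
  then show ?thesis by (simp add: matrix_eq)
qed

lemma sqrt_unique:
  assumes F: "psd F" and E: "ONE F E" and ex: "\<And>x. x = (\<Sum>u\<in>E. cinner_vec u x *s u)"
    and T: "psd T" and TT: "T ** T = F"
  shows "T = Smat E F"
proof -
  have hT: "adj T = T" using psd_hermitian[OF T] .
  have TTv: "T *v (T *v y) = F *v y" for y using TT by (simp add: matrix_vector_mul_assoc)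
  have Tu: "T *v u = of_real (sv F u) *s u" if u: "u \<in> E" for u
  proof -
    define t where "t = sv F u"
    have t0: "0 \<le> t" by (simp add: t_def sv_nonneg)
    have Fu: "F *v u = of_real (t\<^sup>2) *s u"
    proof -
      have "F *v u = cinner_vec u (F *v u) *s u" using E u by (simp add: ONE_def)
      then show ?thesis by (simp add: eig_real[OF F] t_def)
    qed
    show ?thesis
    proof (cases "t = 0")
      case True
      have "cinner_vec (T *v u) (T *v u) = cinner_vec u (T *v (T *v u))"
        using cinner_adj[of u T "T *v u"] hT by simp
      also have "\<dots> = 0" using TTv[of u] Fu True by simp
      finally have "T *v u = 0" using cinner_self_eq0[of "T *v u"] by simp
      then show ?thesis using True by (simp add: t_def)
    next
      case False
      then have tp: "0 < t" using t0 by simp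
      define w where "w = T *v u - of_real t *s u"
      have "T *v w + of_real t *s w = 0"
        by (simp add: w_def matrix_vector_mult_diff_distrib mv_smult TTv Fu vector_smult_assoc
            algebra_simps power2_eq_square vector_sadd_rdistrib[symmetric] vector_ssub_ldistrib)
      then have "cinner_vec w (T *v w) + of_real t * cinner_vec w w = 0"
        using cinner_add_right[of w "T *v w" "of_real t *s w"] by (simp add: cinner_smult_right)
      then have "Re (cinner_vec w (T *v w)) + t * Re (cinner_vec w w) = 0"
        by (metis Re_complex_of_real plus_complex.sel(1) times_complex.sel(1) zero_complex.sel(1) Im_complex_of_real mult_zero_left diff_zero)
      moreover have "0 \<le> Re (cinner_vec w (T *v w))" using T by (simp add: psd_def)
      moreover have "0 \<le> Re (cinner_vec w w)" by (rule cinner_self_nonneg)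
      ultimately have "t * Re (cinner_vec w w) = 0" using tp by (smt (verit) mult_nonneg_nonneg)
      then have "Re (cinner_vec w w) = 0" using tp by simp
      then have "w = 0" by (simp add: cinner_self_eq0)
      then show ?thesis by (simp add: w_def t_def)
    qed
  qed
  have "T *v x = Smat E F *v x" for x
  proof -
    have "T *v x = (\<Sum>u\<in>E. cinner_vec u x *s (T *v u))" by (rule expand_apply[OF E ex])
    also have "\<dots> = Smat E F *v x"
      unfolding Smat_apply by (intro sum.cong refl) (simp add: Tu vector_smult_assoc mult.commute)
    finally show ?thesis .
  qed
  then show ?thesis by (simp add: matrix_eq)
qed

lemma psd_sqrt_eq:
  assumes F: "psd F" and E: "ONE F E" and ex: "\<And>x. x = (\<Sum>u\<in>E. cinner_vec u x *s u)"
  shows "psd_sqrt F = Smat E F"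
  unfolding psd_sqrt_def
proof (rule the_equality)
  show "psd (Smat E F) \<and> Smat E F ** Smat E F = F" using Smat_psd[OF E] Smat_sq[OF F E ex] by simp
  fix T assume "psd T \<and> T ** T = F"
  then show "T = Smat E F" using sqrt_unique[OF F E ex] by blast
qed

definition mtrace :: "complex^'d^'d \<Rightarrow> complex" where
  "mtrace M = (\<Sum>j\<in>UNIV. M $ j $ j)"

lemma trace_basis:
  assumes E: "ONE F E" and ex: "\<And>x. x = (\<Sum>u\<in>E. cinner_vec u x *s u)"
  shows "mtrace M = (\<Sum>u\<in>E. cinner_vec u (M *v u))"
proof -
  have "M $ j $ j = (\<Sum>u\<in>E. cnj (u $ j) * (M *v u) $ j)" for j
  proof -
    have "M $ j $ j = cinner_vec (axis j 1) (M *v axis j 1)" by (simp add: cinner_axis_mat)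
    also have "\<dots> = cinner_vec (axis j 1) (\<Sum>u\<in>E. cinner_vec u (axis j 1) *s (M *v u))"
      by (subst expand_apply[OF E ex]) rule
    also have "\<dots> = (\<Sum>u\<in>E. cnj (u $ j) * (M *v u) $ j)"
      unfolding cinner_sum_right cinner_smult_right
    proof (intro sum.cong refl)
      fix u
      have "cinner_vec u (axis j 1) = cnj (u $ j)"
        using cinner_cnj[of u "axis j 1"] cinner_axis_left[of j u] by simp
      then show "cinner_vec u (axis j 1) * cinner_vec (axis j 1) (M *v u) = cnj (u $ j) * (M *v u) $ j"
        by (simp add: cinner_axis_left)
    qed
    finally show ?thesis .
  qed
  then have "mtrace M = (\<Sum>j\<in>UNIV. \<Sum>u\<in>E. cnj (u $ j) * (M *v u) $ j)" by (simp add: mtrace_def)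
  also have "\<dots> = (\<Sum>u\<in>E. \<Sum>j\<in>UNIV. cnj (u $ j) * (M *v u) $ j)" by (rule sum.swap)
  also have "\<dots> = (\<Sum>u\<in>E. cinner_vec u (M *v u))" by (simp add: cinner_vec_def)
  finally show ?thesis .
qed

lemma cs_unit:
  assumes uu: "cinner_vec u u = 1"
  shows "(cmod (cinner_vec u y))\<^sup>2 \<le> Re (cinner_vec y y)"
proof -
  define c where "c = cinner_vec u y"
  have yu: "cinner_vec y u = cnj c" by (simp add: c_def cinner_cnj[of y])
  have cu: "cinner_vec u y = c" by (simp add: c_def)
  have "cinner_vec (y + (- c) *s u) (y + (- c) *s u) = cinner_vec y y + (- c) * cnj c + cnj (- c) * c + cnj (- c) * (- c) * 1"
    using q_expand[of y "- c" u "mat 1"] unfolding matrix_vector_mul_lid yu uu cu .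
  also have "\<dots> = cinner_vec y y - c * cnj c" by (simp add: algebra_simps)
  finally have "cinner_vec (y + (- c) *s u) (y + (- c) *s u) = cinner_vec y y - c * cnj c" .
  then have "0 \<le> Re (cinner_vec y y - c * cnj c)" using cinner_self_nonneg[of "y + (- c) *s u"] by simp
  also have "Re (cinner_vec y y - c * cnj c) = Re (cinner_vec y y) - (cmod c)\<^sup>2"
    by (simp add: complex_norm_square[symmetric])
  finally show ?thesis by (simp add: c_def)
qed

lemma adj_adj: "adj (adj A) = A"
  by (simp add: adj_def vec_eq_iff)

lemma mv_sum_mat: "(\<Sum>i\<in>I. M i) *v (x::complex^'d) = (\<Sum>i\<in>I. M i *v x)"
  by (induction I rule: infinite_finite_induct) (auto simp: matrix_vector_mult_add_rdistrib)

lemma L2_minkowski: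
  fixes a :: "'i \<Rightarrow> 'u \<Rightarrow> complex"
  assumes "finite E"
  shows "L2_set (\<lambda>i. cmod (\<Sum>u\<in>E. a i u)) I \<le> (\<Sum>u\<in>E. L2_set (\<lambda>i. cmod (a i u)) I)"
  using assms
proof (induction E rule: finite_induct)
  case empty
  then show ?case by (simp add: L2_set_def)
next
  case (insert x E)
  have "L2_set (\<lambda>i. cmod (\<Sum>u\<in>insert x E. a i u)) I
      \<le> L2_set (\<lambda>i. cmod (a i x) + cmod (\<Sum>u\<in>E. a i u)) I"
    using insert by (intro L2_set_mono) (simp_all add: norm_triangle_ineq)
  also have "\<dots> \<le> L2_set (\<lambda>i. cmod (a i x)) I + L2_set (\<lambda>i. cmod (\<Sum>u\<in>E. a i u)) I"
    by (rule L2_set_triangle_ineq)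
  also have "\<dots> \<le> L2_set (\<lambda>i. cmod (a i x)) I + (\<Sum>u\<in>E. L2_set (\<lambda>i. cmod (a i u)) I)"
    using insert.IH by simp
  also have "\<dots> = (\<Sum>u\<in>insert x E. L2_set (\<lambda>i. cmod (a i u)) I)" using insert by simp
  finally show ?case .
qed

lemma mtrace_Smat:
  assumes E: "ONE F E" and ex: "\<And>x. x = (\<Sum>u\<in>E. cinner_vec u x *s u)"
  shows "mtrace (Smat E F) = of_real (\<Sum>u\<in>E. sv F u)"
  unfolding trace_basis[OF E ex] of_real_sum
  by (intro sum.cong refl) (simp add: cinner_Smat[OF E] ONE_on[OF E])

lemma trace_ineq:
  assumes F: "psd F" and E: "ONE F E" and ex: "\<And>x. x = (\<Sum>u\<in>E. cinner_vec u x *s u)"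
    and I: "finite I" and AF: "(\<Sum>i\<in>I. adj (A i) ** A i) = F"
  shows "(\<Sum>i\<in>I. (cmod (mtrace (A i)))\<^sup>2) \<le> (\<Sum>u\<in>E. sv F u)\<^sup>2"
proof -
  have fin: "finite E" using E by (simp add: ONE_def)
  define a where "a i u = cinner_vec u (A i *v u)" for i u
  have tr: "mtrace (A i) = (\<Sum>u\<in>E. a i u)" for i unfolding a_def by (rule trace_basis[OF E ex])
  have col: "L2_set (\<lambda>i. cmod (a i u)) I \<le> sv F u" if u: "u \<in> E" for u
  proof -
    have uu: "cinner_vec u u = 1" using ONE_on[OF E u u] by simp
    have "(\<Sum>i\<in>I. (cmod (a i u))\<^sup>2) \<le> (\<Sum>i\<in>I. Re (cinner_vec (A i *v u) (A i *v u)))"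
      unfolding a_def by (intro sum_mono cs_unit uu)
    also have "\<dots> = Re (\<Sum>i\<in>I. cinner_vec u ((adj (A i) ** A i) *v u))"
    proof -
      have "cinner_vec (A i *v u) (A i *v u) = cinner_vec u ((adj (A i) ** A i) *v u)" for i
        using cinner_adj[of u "adj (A i)" "A i *v u"] by (simp add: adj_adj matrix_vector_mul_assoc)
      then show ?thesis by (simp add: Re_sum)
    qed
    also have "\<dots> = Re (cinner_vec u (F *v u))"
      unfolding cinner_sum_right[symmetric] mv_sum_mat[symmetric] AF ..
    also have "\<dots> = (sv F u)\<^sup>2" by (simp add: eig_real[OF F])
    finally have "(\<Sum>i\<in>I. (cmod (a i u))\<^sup>2) \<le> (sv F u)\<^sup>2" .
    then show ?thesis unfolding L2_set_def
      using sv_nonneg real_le_rsqrt real_sqrt_le_iff by (metis real_sqrt_abs abs_of_nonneg)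
  qed
  have "L2_set (\<lambda>i. cmod (mtrace (A i))) I \<le> (\<Sum>u\<in>E. L2_set (\<lambda>i. cmod (a i u)) I)"
    unfolding tr by (rule L2_minkowski[OF fin])
  also have "\<dots> \<le> (\<Sum>u\<in>E. sv F u)" by (intro sum_mono col)
  finally have L: "L2_set (\<lambda>i. cmod (mtrace (A i))) I \<le> (\<Sum>u\<in>E. sv F u)" .
  have "(\<Sum>i\<in>I. (cmod (mtrace (A i)))\<^sup>2) = (L2_set (\<lambda>i. cmod (mtrace (A i))) I)\<^sup>2"
    unfolding L2_set_def by (simp add: sum_nonneg)
  also have "\<dots> \<le> (\<Sum>u\<in>E. sv F u)\<^sup>2" using L by (intro power_mono) simp_all
  finally show ?thesis .
qed


lemma frob: "(\<Sum>j\<in>UNIV. \<Sum>k\<in>UNIV. (cmod (A $ j $ k))\<^sup>2) = Re (mtrace (adj A ** A))"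
proof -
  have "(adj A ** A) $ k $ k = of_real (\<Sum>j\<in>UNIV. (cmod (A $ j $ k))\<^sup>2)" for k
    unfolding of_real_sum complex_norm_square
    by (simp add: matrix_matrix_mult_def adj_def mult.commute)
  then have "Re (mtrace (adj A ** A)) = (\<Sum>k\<in>UNIV. \<Sum>j\<in>UNIV. (cmod (A $ j $ k))\<^sup>2)"
    by (simp add: mtrace_def Re_sum)
  also have "\<dots> = (\<Sum>j\<in>UNIV. \<Sum>k\<in>UNIV. (cmod (A $ j $ k))\<^sup>2)" by (rule sum.swap)
  finally show ?thesis ..
qed

lemma mtrace_sum: "mtrace (\<Sum>i\<in>I. M i) = (\<Sum>i\<in>I. mtrace (M i))"
  unfolding mtrace_def by (simp add: sum_component) (rule sum.swap)

lemma rint_qf2: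
  fixes A :: "complex^'d::finite^'d"
  shows "rint (qf A) = ccr TYPE('d) * ((cmod (mtrace A))\<^sup>2 + Re (mtrace (adj A ** A)))"
  unfolding rint_qf frob mtrace_def ..

lemma avg_rint:
  fixes A :: "'b \<Rightarrow> 'i \<Rightarrow> complex^'d::finite^'d"
  assumes "finite B" "\<And>b. b \<in> B \<Longrightarrow> finite (I b)"
  shows "avg_disturbance B I A = 1 - (\<Sum>b\<in>B. \<Sum>i\<in>I b. rint (qf (A b i))) / measure lebesgue (ball (0::complex^'d) 1)"
proof -
  have "(\<lambda>\<psi>. \<Sum>b\<in>B. \<Sum>i\<in>I b. (cmod (cinner_vec \<psi> (A b i *v \<psi>)))\<^sup>2) = (\<lambda>\<psi>. \<Sum>b\<in>B. \<Sum>i\<in>I b. qf (A b i) \<psi>)"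
    by (simp add: qf_def)
  then show ?thesis unfolding avg_disturbance_def sphere_avg_rint using rint_sum2[OF assms, where A=A] by simp
qed

theorem mainTheorem4:
  fixes B :: "'b set" and F :: "'b \<Rightarrow> complex^'d^'d"
  assumes "is_POVM B F"
  shows "compatible_instrument B F (\<lambda>b. {()}) (\<lambda>b _. psd_sqrt (F b))
    \<and> (\<forall>(I :: 'b \<Rightarrow> 'i set) A. compatible_instrument B F I A \<longrightarrow>
         avg_disturbance B (\<lambda>b. {()}) (\<lambda>b _. psd_sqrt (F b)) \<le> avg_disturbance B I A)"
proof -
  have finB: "finite B" and psdF: "\<And>b. b \<in> B \<Longrightarrow> psd (F b)"
    using assms by (auto simp: is_POVM_def)
  define P where "P b E \<longleftrightarrow> ONE (F b) E \<and> (\<forall>x. x = (\<Sum>u\<in>E. cinner_vec u x *s u))" for b E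
  define EE where "EE b = (SOME E. P b E)" for b
  have PE: "P b (EE b)" if "b \<in> B" for b
  proof -
    have "\<exists>E. P b E" unfolding P_def by (rule spectral[OF psd_hermitian[OF psdF[OF that]]])
    then show ?thesis unfolding EE_def by (rule someI_ex)
  qed
  have ONE_b: "ONE (F b) (EE b)" and ex_b: "\<And>x. x = (\<Sum>u\<in>EE b. cinner_vec u x *s u)" if "b \<in> B" for b
    using PE[OF that] by (auto simp: P_def)
  have sq: "psd_sqrt (F b) = Smat (EE b) (F b)" if "b \<in> B" for b
    by (rule psd_sqrt_eq[OF psdF[OF that] ONE_b[OF that] ex_b[OF that]])
  have sqF: "adj (psd_sqrt (F b)) ** psd_sqrt (F b) = F b" if "b \<in> B" for b
    unfolding sq[OF that] Smat_herm by (rule Smat_sq[OF psdF[OF that] ONE_b[OF that] ex_b[OF that]])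
  have part1: "compatible_instrument B F (\<lambda>b. {()}) (\<lambda>b _. psd_sqrt (F b))"
    unfolding compatible_instrument_def using sqF by simp
  have part2: "avg_disturbance B (\<lambda>b. {()}) (\<lambda>b _. psd_sqrt (F b)) \<le> avg_disturbance B I A"
    if comp: "compatible_instrument B F I A" for I :: "'b \<Rightarrow> 'i set" and A
  proof -
    have finI: "\<And>b. b \<in> B \<Longrightarrow> finite (I b)" and AF: "\<And>b. b \<in> B \<Longrightarrow> (\<Sum>i\<in>I b. adj (A b i) ** A b i) = F b"
      using comp by (auto simp: compatible_instrument_def)
    define V where "V = measure lebesgue (ball (0::complex^'d) 1)"
    have V: "0 \<le> V" by (simp add: V_def)
    define c where "c = ccr TYPE('d)"
    have c: "0 \<le> c" by (simp add: c_def ccr_nonneg)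
    have eqA: "(\<Sum>i\<in>I b. rint (qf (A b i))) = c * ((\<Sum>i\<in>I b. (cmod (mtrace (A b i)))\<^sup>2) + Re (mtrace (F b)))"
      if b: "b \<in> B" for b
    proof -
      have "(\<Sum>i\<in>I b. rint (qf (A b i))) = (\<Sum>i\<in>I b. c * ((cmod (mtrace (A b i)))\<^sup>2 + Re (mtrace (adj (A b i) ** A b i))))"
        by (simp add: rint_qf2 c_def)
      also have "\<dots> = c * ((\<Sum>i\<in>I b. (cmod (mtrace (A b i)))\<^sup>2) + Re (mtrace (\<Sum>i\<in>I b. adj (A b i) ** A b i)))"
        by (simp add: sum_distrib_left sum.distrib mtrace_sum Re_sum distrib_left)
      finally show ?thesis using AF[OF b] by simp
    qed
    have eqS: "(\<Sum>i\<in>{()}. rint (qf (psd_sqrt (F b)))) = c * ((\<Sum>u\<in>EE b. sv (F b) u)\<^sup>2 + Re (mtrace (F b)))"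
      if b: "b \<in> B" for b
    proof -
      have "(cmod (mtrace (psd_sqrt (F b))))\<^sup>2 = (\<Sum>u\<in>EE b. sv (F b) u)\<^sup>2"
        unfolding sq[OF b] mtrace_Smat[OF ONE_b[OF b] ex_b[OF b]] norm_of_real
        by (simp add: sum_nonneg sv_nonneg)
      then show ?thesis using sqF[OF b] by (simp add: rint_qf2 c_def)
    qed
    have le: "(\<Sum>b\<in>B. \<Sum>i\<in>I b. rint (qf (A b i))) \<le> (\<Sum>b\<in>B. \<Sum>i\<in>{()}. rint (qf (psd_sqrt (F b))))"
    proof (rule sum_mono)
      fix b assume b: "b \<in> B"
      have "(\<Sum>i\<in>I b. (cmod (mtrace (A b i)))\<^sup>2) \<le> (\<Sum>u\<in>EE b. sv (F b) u)\<^sup>2"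
        by (rule trace_ineq[OF psdF[OF b] ONE_b[OF b] ex_b[OF b] finI[OF b] AF[OF b]])
      then show "(\<Sum>i\<in>I b. rint (qf (A b i))) \<le> (\<Sum>i\<in>{()}. rint (qf (psd_sqrt (F b))))"
        unfolding eqA[OF b] eqS[OF b] using c by (intro mult_left_mono) simp_all
    qed
    have "avg_disturbance B (\<lambda>b. {()}) (\<lambda>b _. psd_sqrt (F b)) = 1 - (\<Sum>b\<in>B. \<Sum>i\<in>{()}. rint (qf (psd_sqrt (F b)))) / V"
      unfolding V_def by (rule avg_rint[OF finB]) simp
    also have "\<dots> \<le> 1 - (\<Sum>b\<in>B. \<Sum>i\<in>I b. rint (qf (A b i))) / V"
      using le V by (simp add: divide_right_mono)
    also have "\<dots> = avg_disturbance B I A"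
      unfolding V_def by (rule avg_rint[OF finB finI, symmetric])
    finally show ?thesis .
  qed
  show ?thesis using part1 part2 by blast
qed

end
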